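(* For the submodule $M=[(z-w)^2]$ of $H^2(\mathbb D^2)$, the eigenvalues of the core operator $C$ of $M$ are exactly \[ 0,\quad 1,\quad \pm\frac{2}{n+2}\ \ (n\ge1). \] In particular the second largest eigenvalue of $C$ is $2/3$.
   Context: $H^2(\mathbb D^2)$ is the Hardy space on the unit bidisk with reproducing kernel $K(\lambda,z)=\frac{1}{(1-\overline{\lambda_1}z_1)(1-\overline{\lambda_2}z_2)}$. A submodule $M$ is a closed subspace invariant under multiplication by both coordinate functions; $[q]$ is the smallest submodule containing $q$. If $K^M$ is the reproducing kernel of $M$, the core function is $G^M(\lambda,z)=K^M(\lambda,z)/K(\lambda,z)$ and the core operator $C$ on $H^2(\mathbb D^2)$ is $(Cf)(z)=\int_{\mathbb T^2}G^M(\lambda,z)f(\lambda)\,dm(\lambda)$, $m$ the normalized Lebesgue measure on $\mathbb T^2$; equivalently $C=I-R_1R_1^*-R_2R_2^*+R_1R_2R_1^*R_2^*$ on $M$ and $C=0$ on $M^\perp$, where $R_1,R_2$ are multiplication by $z,w$ restricted to $M$. *)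

theory Defs
  imports "HOL-Analysis.Analysis" "HOL-Library.Function_Algebras"
begin

text \<open>Model of H^2 of the bidisk via Taylor coefficients: f(z,w) = sum a(i,j) z^i w^j
  corresponds to a :: nat * nat => complex, square summable. This is the standard unitary
  identification; the inner product is the l^2 inner product of coefficients.\<close>

type_synonym hvec = "nat \<times> nat \<Rightarrow> complex"

definition H2 :: "hvec set" where
  "H2 = {a. (\<lambda>k. (cmod (a k))\<^sup>2) summable_on UNIV}"

definition hinner :: "hvec \<Rightarrow> hvec \<Rightarrow> complex" where
  "hinner a b = (\<Sum>\<^sub>\<infinity>k. a k * cnj (b k))"

definition hnorm :: "hvec \<Rightarrow> real" where
  "hnorm a = sqrt (\<Sum>\<^sub>\<infinity>k. (cmod (a k))\<^sup>2)"

definition S1 :: "hvec \<Rightarrow> hvec" where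
  "S1 a = (\<lambda>(i, j). if i = 0 then 0 else a (i - 1, j))"

definition S2 :: "hvec \<Rightarrow> hvec" where
  "S2 a = (\<lambda>(i, j). if j = 0 then 0 else a (i, j - 1))"

definition S1adj :: "hvec \<Rightarrow> hvec" where
  "S1adj a = (\<lambda>(i, j). a (Suc i, j))"

definition S2adj :: "hvec \<Rightarrow> hvec" where
  "S2adj a = (\<lambda>(i, j). a (i, Suc j))"

definition hclosed :: "hvec set \<Rightarrow> bool" where
  "hclosed N \<longleftrightarrow> (\<forall>f\<in>H2. (\<forall>e>0. \<exists>g\<in>N. hnorm (f - g) < e) \<longrightarrow> f \<in> N)"

definition hsubspace :: "hvec set \<Rightarrow> bool" where
  "hsubspace N \<longleftrightarrow> N \<subseteq> H2 \<and> 0 \<in> N \<and>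
     (\<forall>f\<in>N. \<forall>g\<in>N. f + g \<in> N) \<and> (\<forall>c::complex. \<forall>f\<in>N. (\<lambda>k. c * f k) \<in> N)"

definition submodule :: "hvec set \<Rightarrow> bool" where
  "submodule N \<longleftrightarrow> hsubspace N \<and> hclosed N \<and> S1 ` N \<subseteq> N \<and> S2 ` N \<subseteq> N"

definition gen_submodule :: "hvec \<Rightarrow> hvec set" where
  "gen_submodule q = \<Inter> {N. submodule N \<and> q \<in> N}"

definition hproj :: "hvec set \<Rightarrow> hvec \<Rightarrow> hvec" where
  "hproj N f = (THE g. g \<in> N \<and> (\<forall>h\<in>N. hinner (f - g) h = 0))"

text \<open>Core operator: C = P_M - S1 P_M S1^* - S2 P_M S2^* + S1 S2 P_M S1^* S2^*, which equals
  I - R1R1^* - R2R2^* + R1R2R1^*R2^* on M and 0 on the orthogonal complement of M.\<close>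

definition core_op :: "hvec set \<Rightarrow> hvec \<Rightarrow> hvec" where
  "core_op N f = hproj N f - S1 (hproj N (S1adj f)) - S2 (hproj N (S2adj f))
      + S1 (S2 (hproj N (S1adj (S2adj f))))"

definition eigenvalues :: "(hvec \<Rightarrow> hvec) \<Rightarrow> complex set" where
  "eigenvalues T = {\<mu>. \<exists>f\<in>H2. f \<noteq> 0 \<and> T f = (\<lambda>k. \<mu> * f k)}"

text \<open>Coefficients of (z - w)^2 = z^2 - 2zw + w^2.\<close>

definition zw_sq :: hvec where
  "zw_sq = (\<lambda>(i, j). if (i, j) = (2, 0) \<or> (i, j) = (0, 2) then 1
                      else if (i, j) = (1, 1) then -2 else 0)"

end

theory Submission
  imports Defs
begin

lemma H2_D: "f \<in> H2 \<Longrightarrow> (\<lambda>k. (cmod (f k))\<^sup>2) summable_on UNIV"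
  by (simp add: H2_def)

lemma H2_zero[simp]: "(0::hvec) \<in> H2"
  by (simp add: H2_def)

lemma H2_finite:
  assumes "finite S" "\<And>k. k \<notin> S \<Longrightarrow> f k = 0"
  shows "f \<in> H2"
proof -
  have "(\<lambda>k. (cmod (f k))\<^sup>2) summable_on S" using assms(1) by simp
  then show ?thesis unfolding H2_def
    by (simp, rule summable_on_cong_neutral[THEN iffD1, rotated -1]) (auto simp: assms(2))
qed

lemma sq_add_le: "(cmod (a + b))\<^sup>2 \<le> 2 * (cmod a)\<^sup>2 + 2 * (cmod b)\<^sup>2"
proof -
  have "cmod (a + b) \<le> cmod a + cmod b" by (rule norm_triangle_ineq)
  then have "(cmod (a + b))\<^sup>2 \<le> (cmod a + cmod b)\<^sup>2"
    by (simp add: power_mono)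
  also have "\<dots> \<le> 2 * (cmod a)\<^sup>2 + 2 * (cmod b)\<^sup>2"
    using sum_squares_bound[of "cmod a" "cmod b"] by (simp add: power2_sum)
  finally show ?thesis .
qed

lemma H2_add: assumes "f \<in> H2" "g \<in> H2" shows "f + g \<in> H2"
proof -
  have "(\<lambda>k. 2 * (cmod (f k))\<^sup>2 + 2 * (cmod (g k))\<^sup>2) summable_on UNIV"
    using assms by (intro summable_on_add summable_on_cmult_right) (auto dest: H2_D)
  then have "(\<lambda>k. (cmod ((f + g) k))\<^sup>2) summable_on UNIV"
    by (rule summable_on_comparison_test) (auto simp: sq_add_le)
  then show ?thesis by (simp add: H2_def)
qed

lemma H2_scale: assumes "f \<in> H2" shows "(\<lambda>k. c * f k) \<in> H2"
proof -
  have "(\<lambda>k. (cmod c)\<^sup>2 * (cmod (f k))\<^sup>2) summable_on UNIV"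
    using assms by (intro summable_on_cmult_right) (auto dest: H2_D)
  then show ?thesis unfolding H2_def by (simp add: norm_mult power_mult_distrib)
qed

lemma H2_diff: assumes "f \<in> H2" "g \<in> H2" shows "f - g \<in> H2"
proof -
  have "f + (\<lambda>k. (-1) * g k) \<in> H2" using H2_add[OF assms(1) H2_scale[OF assms(2)]] by blast
  moreover have "f + (\<lambda>k. (-1) * g k) = f - g" by (simp add: fun_eq_iff)
  ultimately show ?thesis by simp
qed

lemma H2_prod: assumes "f \<in> H2" "g \<in> H2"
  shows "(\<lambda>k. f k * cnj (g k)) summable_on UNIV"
proof (rule abs_summable_summable)
  have "(\<lambda>k. (cmod (f k))\<^sup>2 + (cmod (g k))\<^sup>2) summable_on UNIV"
    using assms by (intro summable_on_add) (auto dest: H2_D)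
  then show "(\<lambda>k. norm (f k * cnj (g k))) summable_on UNIV"
  proof (rule summable_on_comparison_test)
    fix k
    show "norm (f k * cnj (g k)) \<le> (cmod (f k))\<^sup>2 + (cmod (g k))\<^sup>2"
    proof -
      have "2 * (cmod (f k) * cmod (g k)) \<le> (cmod (f k))\<^sup>2 + (cmod (g k))\<^sup>2"
        using sum_squares_bound[of "cmod (f k)" "cmod (g k)"] by (simp add: mult.assoc)
      moreover have "0 \<le> cmod (f k) * cmod (g k)" by simp
      ultimately have "cmod (f k) * cmod (g k) \<le> (cmod (f k))\<^sup>2 + (cmod (g k))\<^sup>2" by linarith
      then show ?thesis by (simp add: norm_mult)
    qed
  qed auto
qed

lemma summable_extend_zero:
  fixes g :: "'a \<Rightarrow> real"
  assumes "g summable_on A" "\<And>x. x \<notin> A \<Longrightarrow> g x = 0"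
  shows "g summable_on UNIV"
  using summable_on_cong_neutral[where S=A and T=UNIV and f=g and g=g] assms by auto

lemma H2_S1: assumes "f \<in> H2" shows "S1 f \<in> H2"
proof -
  let ?h = "\<lambda>(i::nat, j::nat). (Suc i, j)"
  have inj: "inj_on ?h UNIV" by (auto simp: inj_on_def)
  have "((\<lambda>k. (cmod (S1 f k))\<^sup>2) \<circ> ?h) = (\<lambda>k. (cmod (f k))\<^sup>2)"
    by (auto simp: S1_def fun_eq_iff)
  then have "((\<lambda>k. (cmod (S1 f k))\<^sup>2) \<circ> ?h) summable_on UNIV"
    using assms by (simp add: H2_D)
  then have "(\<lambda>k. (cmod (S1 f k))\<^sup>2) summable_on ?h ` UNIV"
    using summable_on_reindex[OF inj] by blast
  then have "(\<lambda>k. (cmod (S1 f k))\<^sup>2) summable_on UNIV"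
  proof (rule summable_extend_zero)
    fix x assume x: "x \<notin> ?h ` UNIV"
    obtain i j where xij: "x = (i, j)" by fastforce
    have "i = 0"
    proof (rule ccontr)
      assume "i \<noteq> 0"
      then obtain i' where "i = Suc i'" using not0_implies_Suc by blast
      then have "x = ?h (i', j)" using xij by simp
      then show False using x by blast
    qed
    then show "(cmod (S1 f x))\<^sup>2 = 0" using xij by (simp add: S1_def)
  qed
  then show ?thesis by (simp add: H2_def)
qed

lemma H2_S2: assumes "f \<in> H2" shows "S2 f \<in> H2"
proof -
  let ?h = "\<lambda>(i::nat, j::nat). (i, Suc j)"
  have inj: "inj_on ?h UNIV" by (auto simp: inj_on_def)
  have "((\<lambda>k. (cmod (S2 f k))\<^sup>2) \<circ> ?h) = (\<lambda>k. (cmod (f k))\<^sup>2)"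
    by (auto simp: S2_def fun_eq_iff)
  then have "((\<lambda>k. (cmod (S2 f k))\<^sup>2) \<circ> ?h) summable_on UNIV"
    using assms by (simp add: H2_D)
  then have "(\<lambda>k. (cmod (S2 f k))\<^sup>2) summable_on ?h ` UNIV"
    using summable_on_reindex[OF inj] by blast
  then have "(\<lambda>k. (cmod (S2 f k))\<^sup>2) summable_on UNIV"
  proof (rule summable_extend_zero)
    fix x assume x: "x \<notin> ?h ` UNIV"
    obtain i j where xij: "x = (i, j)" by fastforce
    have "j = 0"
    proof (rule ccontr)
      assume "j \<noteq> 0"
      then obtain j' where "j = Suc j'" using not0_implies_Suc by blast
      then have "x = ?h (i, j')" using xij by simp
      then show False using x by blast
    qed
    then show "(cmod (S2 f x))\<^sup>2 = 0" using xij by (simp add: S2_def)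
  qed
  then show ?thesis by (simp add: H2_def)
qed

lemma H2_S1adj: assumes "f \<in> H2" shows "S1adj f \<in> H2"
proof -
  let ?h = "\<lambda>(i::nat, j::nat). (Suc i, j)"
  have inj: "inj_on ?h UNIV" by (auto simp: inj_on_def)
  have "(\<lambda>k. (cmod (f k))\<^sup>2) summable_on ?h ` UNIV"
    by (rule summable_on_subset[OF H2_D[OF assms] subset_UNIV])
  then have "((\<lambda>k. (cmod (f k))\<^sup>2) \<circ> ?h) summable_on UNIV"
    using summable_on_reindex[OF inj] by blast
  moreover have "((\<lambda>k. (cmod (f k))\<^sup>2) \<circ> ?h) = (\<lambda>k. (cmod (S1adj f k))\<^sup>2)"
    by (auto simp: S1adj_def fun_eq_iff)
  ultimately show ?thesis by (simp add: H2_def)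
qed

lemma H2_S2adj: assumes "f \<in> H2" shows "S2adj f \<in> H2"
proof -
  let ?h = "\<lambda>(i::nat, j::nat). (i, Suc j)"
  have inj: "inj_on ?h UNIV" by (auto simp: inj_on_def)
  have "(\<lambda>k. (cmod (f k))\<^sup>2) summable_on ?h ` UNIV"
    by (rule summable_on_subset[OF H2_D[OF assms] subset_UNIV])
  then have "((\<lambda>k. (cmod (f k))\<^sup>2) \<circ> ?h) summable_on UNIV"
    using summable_on_reindex[OF inj] by blast
  moreover have "((\<lambda>k. (cmod (f k))\<^sup>2) \<circ> ?h) = (\<lambda>k. (cmod (S2adj f k))\<^sup>2)"
    by (auto simp: S2adj_def fun_eq_iff)
  ultimately show ?thesis by (simp add: H2_def)
qed

lemma coord_le_hnorm: assumes "a \<in> H2" shows "cmod (a k) \<le> hnorm a"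
proof -
  have "sum (\<lambda>k. (cmod (a k))\<^sup>2) {k} \<le> (\<Sum>\<^sub>\<infinity>k. (cmod (a k))\<^sup>2)"
    using assms by (intro finite_sum_le_infsum) (auto simp: H2_D)
  then show ?thesis unfolding hnorm_def by (simp add: real_le_rsqrt)
qed

definition Acf :: "nat \<Rightarrow> hvec \<Rightarrow> complex" where
  "Acf d g = (\<Sum>i\<le>d. g (i, d - i))"

definition Bcf :: "nat \<Rightarrow> hvec \<Rightarrow> complex" where
  "Bcf d g = (\<Sum>i\<le>d. of_nat i * g (i, d - i))"

definition Mset :: "hvec set" where
  "Mset = {f \<in> H2. \<forall>d. Acf d f = 0 \<and> Bcf d f = 0}"

definition Tri :: "nat \<Rightarrow> (nat \<times> nat) set" where
  "Tri D = {(i, j). i + j \<le> D}"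

lemma finite_Tri: "finite (Tri D)"
proof -
  have "Tri D \<subseteq> {..D} \<times> {..D}" by (auto simp: Tri_def)
  then show ?thesis by (rule finite_subset) auto
qed

lemma sum_Tri: "sum g (Tri D) = (\<Sum>d\<le>D. \<Sum>i\<le>d. g (i, d - i))"
proof -
  let ?h = "\<lambda>(d::nat, i::nat). (i, d - i)"
  have inj: "inj_on ?h (SIGMA d:{..D}. {..d})"
    by (auto simp: inj_on_def)
  have img: "Tri D = ?h ` (SIGMA d:{..D}. {..d})"
  proof
    show "Tri D \<subseteq> ?h ` (SIGMA d:{..D}. {..d})"
    proof
      fix k assume "k \<in> Tri D"
      then obtain i j where k: "k = (i, j)" "i + j \<le> D" by (auto simp: Tri_def)
      then have "(i + j, i) \<in> (SIGMA d:{..D}. {..d})" by auto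
      moreover have "k = ?h (i + j, i)" using k by simp
      ultimately show "k \<in> ?h ` (SIGMA d:{..D}. {..d})" by blast
    qed
  next
    show "?h ` (SIGMA d:{..D}. {..d}) \<subseteq> Tri D" by (auto simp: Tri_def)
  qed
  have "sum g (Tri D) = sum (g \<circ> ?h) (SIGMA d:{..D}. {..d})"
    unfolding img by (rule sum.reindex[OF inj])
  also have "\<dots> = (\<Sum>d\<le>D. \<Sum>i\<le>d. g (i, d - i))"
    by (subst sum.Sigma) (auto simp: case_prod_unfold)
  finally show ?thesis .
qed

lemma Tri_filterlim: "filterlim Tri (finite_subsets_at_top UNIV) sequentially"
  unfolding filterlim_finite_subsets_at_top
proof (intro allI impI)
  fix X :: "(nat \<times> nat) set" assume X: "finite X \<and> X \<subseteq> UNIV"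
  then have "finite (fst ` X)" "finite (snd ` X)" by auto
  then obtain n1 n2 where n1: "\<forall>x\<in>fst ` X. x \<le> n1" and n2: "\<forall>x\<in>snd ` X. x \<le> n2"
    by (meson finite_nat_set_iff_bounded_le)
  have "X \<subseteq> Tri D" if "D \<ge> n1 + n2" for D
  proof
    fix k assume "k \<in> X"
    then have "fst k \<le> n1" "snd k \<le> n2" using n1 n2 by auto
    then show "k \<in> Tri D" using that by (cases k) (auto simp: Tri_def)
  qed
  then show "\<forall>\<^sub>F D in sequentially. finite (Tri D) \<and> X \<subseteq> Tri D \<and> Tri D \<subseteq> UNIV"
    using finite_Tri unfolding eventually_sequentially by blast
qed

lemma has_sum_Tri:
  assumes "(f has_sum s) UNIV"
  shows "(\<lambda>D. \<Sum>d\<le>D. \<Sum>i\<le>d. f (i, d - i)) \<longlonglongrightarrow> s"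
proof -
  have "(sum f \<longlongrightarrow> s) (finite_subsets_at_top UNIV)" using assms by (simp add: has_sum_def)
  then have "(\<lambda>D. sum f (Tri D)) \<longlonglongrightarrow> s"
    using filterlim_compose[OF _ Tri_filterlim] by blast
  then show ?thesis by (simp add: sum_Tri)
qed

lemma Acf_add[simp]: "Acf d (f + g) = Acf d f + Acf d g"
  by (simp add: Acf_def sum.distrib)
lemma Bcf_add[simp]: "Bcf d (f + g) = Bcf d f + Bcf d g"
  by (simp add: Bcf_def sum.distrib algebra_simps)
lemma Acf_diff[simp]: "Acf d (f - g) = Acf d f - Acf d g"
  by (simp add: Acf_def sum_subtractf)
lemma Bcf_diff[simp]: "Bcf d (f - g) = Bcf d f - Bcf d g"
  by (simp add: Bcf_def sum_subtractf algebra_simps)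
lemma Acf_scale[simp]: "Acf d (\<lambda>k. c * f k) = c * Acf d f"
  by (simp add: Acf_def sum_distrib_left)
lemma Bcf_scale[simp]: "Bcf d (\<lambda>k. c * f k) = c * Bcf d f"
  by (simp add: Bcf_def sum_distrib_left algebra_simps)
lemma Acf_zero[simp]: "Acf d 0 = 0"
  by (simp add: Acf_def)
lemma Bcf_zero[simp]: "Bcf d 0 = 0"
  by (simp add: Bcf_def)

lemma Acf_S1_Suc: "Acf (Suc d) (S1 g) = Acf d g"
  unfolding Acf_def by (subst sum.atMost_Suc_shift) (simp add: S1_def)

lemma Bcf_S1_Suc: "Bcf (Suc d) (S1 g) = Bcf d g + Acf d g"
  unfolding Acf_def Bcf_def by (subst sum.atMost_Suc_shift) (simp add: S1_def sum.distrib algebra_simps)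

lemma Acf_S1_0: "Acf 0 (S1 g) = 0"
  by (simp add: Acf_def S1_def)
lemma Bcf_S1_0: "Bcf 0 (S1 g) = 0"
  by (simp add: Bcf_def S1_def)

lemma Acf_S2_Suc: "Acf (Suc d) (S2 g) = Acf d g"
  unfolding Acf_def
  by (subst sum.atMost_Suc) (auto simp: S2_def Suc_diff_le intro!: sum.cong)

lemma Bcf_S2_Suc: "Bcf (Suc d) (S2 g) = Bcf d g"
  unfolding Bcf_def
  by (subst sum.atMost_Suc) (auto simp: S2_def Suc_diff_le intro!: sum.cong)

lemma Acf_S2_0: "Acf 0 (S2 g) = 0"
  by (simp add: Acf_def S2_def)
lemma Bcf_S2_0: "Bcf 0 (S2 g) = 0"
  by (simp add: Bcf_def S2_def)

lemma Acf_S1adj: "Acf d (S1adj g) = Acf (Suc d) g - g (0, Suc d)"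
  unfolding Acf_def by (subst sum.atMost_Suc_shift) (simp add: S1adj_def)

lemma Bcf_S1adj: "Bcf d (S1adj g) = Bcf (Suc d) g - Acf (Suc d) g + g (0, Suc d)"
proof -
  have "Bcf (Suc d) g = Bcf d (S1adj g) + Acf d (S1adj g)"
    unfolding Acf_def Bcf_def by (subst sum.atMost_Suc_shift) (simp add: S1adj_def sum.distrib algebra_simps)
  then show ?thesis by (simp add: Acf_S1adj)
qed

lemma Acf_S2adj: "Acf d (S2adj g) = Acf (Suc d) g - g (Suc d, 0)"
  unfolding Acf_def
  by (subst sum.atMost_Suc) (auto simp: S2adj_def Suc_diff_le intro!: sum.cong)

lemma Bcf_S2adj: "Bcf d (S2adj g) = Bcf (Suc d) g - of_nat (Suc d) * g (Suc d, 0)"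
  unfolding Bcf_def
  by (subst sum.atMost_Suc) (auto simp: S2adj_def Suc_diff_le intro!: sum.cong)

lemma Mset_H2: "f \<in> Mset \<Longrightarrow> f \<in> H2" by (simp add: Mset_def)

lemma Mset_add: "f \<in> Mset \<Longrightarrow> g \<in> Mset \<Longrightarrow> f + g \<in> Mset"
  by (simp add: Mset_def H2_add)
lemma Mset_scale: "f \<in> Mset \<Longrightarrow> (\<lambda>k. c * f k) \<in> Mset"
  by (simp add: Mset_def H2_scale)
lemma Mset_diff: "f \<in> Mset \<Longrightarrow> g \<in> Mset \<Longrightarrow> f - g \<in> Mset"
  by (simp add: Mset_def H2_diff)
lemma Mset_zero: "0 \<in> Mset"
  by (simp add: Mset_def)

lemma Mset_S1: "f \<in> Mset \<Longrightarrow> S1 f \<in> Mset"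
  unfolding Mset_def
proof (intro CollectI conjI allI)
  assume f: "f \<in> {f \<in> H2. \<forall>d. Acf d f = 0 \<and> Bcf d f = 0}"
  then show "S1 f \<in> H2" by (simp add: H2_S1)
  fix d show "Acf d (S1 f) = 0" "Bcf d (S1 f) = 0"
    using f by (cases d; simp add: Acf_S1_0 Bcf_S1_0 Acf_S1_Suc Bcf_S1_Suc)+
qed

lemma Mset_S2: "f \<in> Mset \<Longrightarrow> S2 f \<in> Mset"
  unfolding Mset_def
proof (intro CollectI conjI allI)
  assume f: "f \<in> {f \<in> H2. \<forall>d. Acf d f = 0 \<and> Bcf d f = 0}"
  then show "S2 f \<in> H2" by (simp add: H2_S2)
  fix d show "Acf d (S2 f) = 0" "Bcf d (S2 f) = 0"
    using f by (cases d; simp add: Acf_S2_0 Bcf_S2_0 Acf_S2_Suc Bcf_S2_Suc)+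
qed

lemma Acf_bound: assumes "a \<in> H2" shows "cmod (Acf d a) \<le> (real d + 1) * hnorm a"
proof -
  have "cmod (Acf d a) \<le> (\<Sum>i\<le>d. hnorm a)"
    unfolding Acf_def by (rule sum_norm_le) (simp add: coord_le_hnorm assms)
  then show ?thesis by (simp add: add.commute)
qed

lemma Bcf_bound: assumes "a \<in> H2" shows "cmod (Bcf d a) \<le> (real d + 1) * ((real d + 1) * hnorm a)"
proof -
  have "cmod (Bcf d a) \<le> (\<Sum>i\<le>d. (real d + 1) * hnorm a)"
    unfolding Bcf_def
  proof (rule sum_norm_le)
    fix i assume "i \<in> {..d}"
    then have "real i \<le> real d + 1" by simp
    moreover have "cmod (a (i, d - i)) \<le> hnorm a" by (simp add: coord_le_hnorm assms)
    ultimately show "cmod (of_nat i * a (i, d - i)) \<le> (real d + 1) * hnorm a"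
      by (simp add: norm_mult mult_mono)
  qed
  then show ?thesis by (simp add: add.commute)
qed

lemma aux_e: "(r::real) > 0 \<Longrightarrow> 2 * (r * (r * (S / (2 * r * r)))) = S"
  by (simp add: field_simps)

lemma hclosed_Mset: "hclosed Mset"
  unfolding hclosed_def
proof (intro ballI impI)
  fix f assume f: "f \<in> H2" and appr: "\<forall>e>0. \<exists>g\<in>Mset. hnorm (f - g) < e"
  have "Acf d f = 0 \<and> Bcf d f = 0" for d
  proof (rule ccontr)
    assume "\<not> (Acf d f = 0 \<and> Bcf d f = 0)"
    then have pos: "0 < cmod (Acf d f) + cmod (Bcf d f)"
      by (metis add_nonneg_pos add_pos_nonneg norm_ge_zero zero_less_norm_iff)
    define e where "e = (cmod (Acf d f) + cmod (Bcf d f)) / (2 * (real d + 1) * (real d + 1))"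
    have "e > 0" using pos by (simp add: e_def)
    then obtain g where g: "g \<in> Mset" "hnorm (f - g) < e" using appr by blast
    have fg: "f - g \<in> H2" using f g by (simp add: H2_diff Mset_H2)
    have "Acf d (f - g) = Acf d f" "Bcf d (f - g) = Bcf d f" using g by (auto simp: Mset_def)
    then have "cmod (Acf d f) \<le> (real d + 1) * hnorm (f - g)"
      "cmod (Bcf d f) \<le> (real d + 1) * ((real d + 1) * hnorm (f - g))"
      using Acf_bound[OF fg, of d] Bcf_bound[OF fg, of d] by auto
    moreover have "0 \<le> hnorm (f - g)" by (simp add: hnorm_def infsum_nonneg)
    then have "(real d + 1) * hnorm (f - g) \<le> (real d + 1) * ((real d + 1) * hnorm (f - g))"
      by (intro mult_left_mono) (auto intro: mult_left_le_one_le[of "hnorm (f - g)"] 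
           simp: mult_le_cancel_right1 order_trans)
    moreover have "(real d + 1) * ((real d + 1) * hnorm (f - g)) < (real d + 1) * ((real d + 1) * e)"
      using g(2) by (intro mult_strict_left_mono) auto
    ultimately have "cmod (Acf d f) + cmod (Bcf d f) < 2 * ((real d + 1) * ((real d + 1) * e))"
      by linarith
    also have "\<dots> = cmod (Acf d f) + cmod (Bcf d f)"
      unfolding e_def by (rule aux_e) simp
    finally show False by simp
  qed
  then show "f \<in> Mset" using f by (simp add: Mset_def)
qed

lemma zw_sq_H2: "zw_sq \<in> H2"
proof (rule H2_finite[of "{(2::nat,0::nat),(1,1),(0,2)}"])
  fix k assume "k \<notin> {(2::nat,0::nat),(1,1),(0,2)}"
  then show "zw_sq k = 0" by (cases k) (simp add: zw_sq_def)
qed simp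

lemma zw_sq_Mset: "zw_sq \<in> Mset"
proof -
  have "Acf d zw_sq = 0 \<and> Bcf d zw_sq = 0" for d
  proof (cases "d = 2")
    case True
    then show ?thesis
      by (simp add: Acf_def Bcf_def zw_sq_def numeral_2_eq_2 atMost_Suc)
  next
    case False
    then have "zw_sq (i, d - i) = 0" if "i \<le> d" for i
      using that by (auto simp: zw_sq_def)
    then show ?thesis by (simp add: Acf_def Bcf_def)
  qed
  then show ?thesis by (simp add: Mset_def zw_sq_H2)
qed

lemma submodule_Mset: "submodule Mset"
proof -
  have "Mset \<subseteq> H2" using Mset_H2 by blast
  moreover have "S1 ` Mset \<subseteq> Mset" using Mset_S1 by blast
  moreover have "S2 ` Mset \<subseteq> Mset" using Mset_S2 by blast
  moreover have "\<forall>f\<in>Mset. \<forall>g\<in>Mset. f + g \<in> Mset" using Mset_add by blast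
  moreover have "\<forall>c::complex. \<forall>f\<in>Mset. (\<lambda>k. c * f k) \<in> Mset" using Mset_scale by blast
  ultimately show ?thesis unfolding submodule_def hsubspace_def
    using Mset_zero hclosed_Mset by blast
qed

lemma gen_sub_le: "gen_submodule zw_sq \<subseteq> Mset"
  unfolding gen_submodule_def using submodule_Mset zw_sq_Mset by (intro Inter_lower) simp

definition wv :: "nat \<Rightarrow> hvec" where "wv m = (S2 ^^ m) zw_sq"

lemma wv_Mset: "wv m \<in> Mset"
  by (induction m) (simp_all add: wv_def zw_sq_Mset Mset_S2)

lemma wv_supp: "wv m (i, j) \<noteq> 0 \<Longrightarrow> i + j = m + 2"
proof (induction m arbitrary: j)
  case 0
  then show ?case by (auto simp: wv_def zw_sq_def split: if_splits)
next
  case (Suc m)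
  then have "j \<noteq> 0" "wv m (i, j - 1) \<noteq> 0" by (auto simp: wv_def S2_def split: if_splits)
  then show ?case using Suc.IH[of "j - 1"] by simp
qed

lemma wv_corner: "wv m (0, m + 2) = 1"
proof (induction m)
  case 0
  then show ?case by (simp add: wv_def zw_sq_def)
next
  case (Suc m)
  then show ?case by (simp add: wv_def S2_def)
qed

lemma submodule_facts:
  assumes "submodule N"
  shows "0 \<in> N" "\<And>f g. f \<in> N \<Longrightarrow> g \<in> N \<Longrightarrow> f + g \<in> N"
    "\<And>f c. f \<in> N \<Longrightarrow> (\<lambda>k. c * f k) \<in> N" "\<And>f. f \<in> N \<Longrightarrow> S1 f \<in> N"
    "\<And>f. f \<in> N \<Longrightarrow> S2 f \<in> N" "hclosed N" "N \<subseteq> H2"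
proof -
  have h: "hsubspace N" "hclosed N" "S1 ` N \<subseteq> N" "S2 ` N \<subseteq> N"
    using assms unfolding submodule_def by auto
  then show "hclosed N" by simp
  from h(1) show "0 \<in> N" "N \<subseteq> H2" unfolding hsubspace_def by auto
  fix f g c assume f: "f \<in> N"
  from h(3) f show "S1 f \<in> N" by (rule subsetD[OF _ imageI])
  from h(4) f show "S2 f \<in> N" by (rule subsetD[OF _ imageI])
  from h(1) f show "(\<lambda>k. c * f k) \<in> N" unfolding hsubspace_def by auto
  assume "g \<in> N"
  with h(1) f show "f + g \<in> N" unfolding hsubspace_def by auto
qed

lemma wv_N: assumes "submodule N" "zw_sq \<in> N" shows "wv m \<in> N"
  by (induction m) (simp_all add: wv_def assms submodule_facts[OF assms(1)])

lemma deg_in_N: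
  assumes N: "submodule N" "zw_sq \<in> N"
  shows "(\<forall>i j. i + j \<noteq> d \<longrightarrow> g (i, j) = 0) \<Longrightarrow> Acf d g = 0 \<Longrightarrow> Bcf d g = 0 \<Longrightarrow> g \<in> N"
proof (induction d arbitrary: g)
  case 0
  then have g00: "g (0, 0) = 0" by (simp add: Acf_def)
  have "g (a, b) = 0" for a b using 0(1) g00 by (cases "a + b = 0") auto
  then have "g = 0" by (auto simp: fun_eq_iff)
  then show ?case using submodule_facts(1)[OF N(1)] by metis
next
  case (Suc d g)
  show ?case
  proof (cases "d = 0")
    case True
    then have "g (1, 0) = 0" "g (0, 1) = 0" using Suc.prems
      by (simp_all add: Acf_def Bcf_def)
    with Suc.prems(1) True have "g = 0" 
      by (auto simp: fun_eq_iff) (metis One_nat_def add_is_1)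
    then show ?thesis using submodule_facts(1)[OF N(1)] by metis
  next
    case False
    define m where "m = d - 1"
    have m2: "m + 2 = Suc d" using False by (simp add: m_def)
    define c where "c = g (0, Suc d)"
    define w where "w = wv m"
    define h where "h = g - (\<lambda>k. c * w k)"
    have wM: "w \<in> Mset" by (simp add: w_def wv_Mset)
    then have wAB: "Acf (Suc d) w = 0" "Bcf (Suc d) w = 0" by (auto simp: Mset_def)
    have wc: "w (0, Suc d) = 1" using wv_corner[of m] m2 by (simp add: w_def)
    have wsupp: "w (i, j) = 0" if "i + j \<noteq> Suc d" for i j
      using wv_supp[of m i j] that m2 by (auto simp: w_def)
    have h0: "h (0, j) = 0" for j
    proof (cases "j = Suc d")
      case True
      then show ?thesis by (simp add: h_def c_def wc)
    next
      case False
      then show ?thesis using Suc.prems(1) wsupp[of 0 j] by (simp add: h_def)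
    qed
    define h' where "h' = S1adj h"
    have h'supp: "\<forall>i j. i + j \<noteq> d \<longrightarrow> h' (i, j) = 0"
      using Suc.prems(1) wsupp by (simp add: h'_def S1adj_def h_def)
    have hA: "Acf (Suc d) h = 0" "Bcf (Suc d) h = 0"
      using Suc.prems wAB by (simp_all add: h_def)
    have "Acf d h' = 0" "Bcf d h' = 0"
      using hA h0 by (simp_all add: h'_def Acf_S1adj Bcf_S1adj)
    then have "h' \<in> N" using Suc.IH h'supp by blast
    then have "S1 h' \<in> N" using submodule_facts(4)[OF N(1)] by blast
    moreover have "S1 h' = h"
      using h0 by (auto simp: fun_eq_iff h'_def S1_def S1adj_def)
    ultimately have "h \<in> N" by simp
    moreover have "(\<lambda>k. c * w k) \<in> N"
      using wv_N[OF N] submodule_facts(3)[OF N(1)] by (simp add: w_def)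
    ultimately have "h + (\<lambda>k. c * w k) \<in> N" using submodule_facts(2)[OF N(1)] by blast
    moreover have "h + (\<lambda>k. c * w k) = g" by (simp add: h_def fun_eq_iff)
    ultimately show ?thesis by simp
  qed
qed

definition degpart :: "nat \<Rightarrow> hvec \<Rightarrow> hvec" where
  "degpart d f = (\<lambda>(i, j). if i + j = d then f (i, j) else 0)"

definition trunc :: "nat \<Rightarrow> hvec \<Rightarrow> hvec" where
  "trunc D f = (\<lambda>(i, j). if i + j \<le> D then f (i, j) else 0)"

lemma Acf_degpart: "Acf d (degpart d f) = Acf d f"
  unfolding Acf_def degpart_def by (rule sum.cong) auto

lemma Bcf_degpart: "Bcf d (degpart d f) = Bcf d f"
  unfolding Bcf_def degpart_def by (rule sum.cong) auto

lemma degpart_N: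
  assumes N: "submodule N" "zw_sq \<in> N" and f: "f \<in> Mset"
  shows "degpart d f \<in> N"
proof (rule deg_in_N[OF N])
  show "\<forall>i j. i + j \<noteq> d \<longrightarrow> degpart d f (i, j) = 0" by (simp add: degpart_def)
  show "Acf d (degpart d f) = 0" "Bcf d (degpart d f) = 0"
    using f by (simp_all add: Acf_degpart Bcf_degpart Mset_def)
qed

lemma trunc_N:
  assumes N: "submodule N" "zw_sq \<in> N" and f: "f \<in> Mset"
  shows "trunc D f \<in> N"
proof (induction D)
  case 0
  have "trunc 0 f = degpart 0 f" by (auto simp: fun_eq_iff trunc_def degpart_def)
  then show ?case using degpart_N[OF N f] by simp
next
  case (Suc D)
  have eq: "trunc (Suc D) f = trunc D f + degpart (Suc D) f"
    by (auto simp: fun_eq_iff trunc_def degpart_def)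
  have "trunc D f + degpart (Suc D) f \<in> N"
    using degpart_N[OF N f] Suc.IH submodule_facts(2)[OF N(1)] by blast
  then show ?case by (simp only: eq)
qed

lemma has_sum_Tri':
  assumes "(f has_sum s) UNIV"
  shows "(\<lambda>D. sum f (Tri D)) \<longlonglongrightarrow> s"
  using has_sum_Tri[OF assms] by (simp add: sum_Tri)

lemma trunc_approx:
  assumes f: "f \<in> H2" and e: "e > 0"
  shows "\<exists>D. hnorm (f - trunc D f) < e"
proof -
  define F where "F = (\<lambda>k. (cmod (f k))\<^sup>2)"
  have Fs: "F summable_on UNIV" using f by (simp add: F_def H2_D)
  define S where "S = infsum F UNIV"
  have "(F has_sum S) UNIV" using Fs by (simp add: S_def)
  then have "(\<lambda>D. sum F (Tri D)) \<longlonglongrightarrow> S" by (rule has_sum_Tri')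
  then obtain D where D: "norm (sum F (Tri D) - S) < e\<^sup>2"
    using e LIMSEQ_D[of _ S "e\<^sup>2"] by fastforce
  have eq: "(\<lambda>k. (cmod ((f - trunc D f) k))\<^sup>2) = (\<lambda>k. if k \<in> Tri D then 0 else F k)"
    by (auto simp: fun_eq_iff trunc_def Tri_def F_def)
  have "infsum (\<lambda>k. if k \<in> Tri D then 0 else F k) UNIV = infsum F (UNIV - Tri D)"
    by (rule infsum_cong_neutral) auto
  also have "\<dots> = S - infsum F (Tri D)"
    unfolding S_def by (rule infsum_Diff) (auto simp: Fs finite_Tri)
  also have "\<dots> = S - sum F (Tri D)" by (simp add: finite_Tri)
  finally have "hnorm (f - trunc D f) = sqrt (S - sum F (Tri D))"
    by (simp only: hnorm_def eq)
  also have "\<dots> < sqrt (e\<^sup>2)"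
    using D by (intro real_sqrt_less_mono) auto
  also have "\<dots> = e" using e by simp
  finally show ?thesis by blast
qed

lemma Mset_le_N:
  assumes N: "submodule N" "zw_sq \<in> N"
  shows "Mset \<subseteq> N"
proof
  fix f assume f: "f \<in> Mset"
  then have fH: "f \<in> H2" by (simp add: Mset_H2)
  have "\<forall>e>0. \<exists>g\<in>N. hnorm (f - g) < e"
    using trunc_approx[OF fH] trunc_N[OF N f] by blast
  then show "f \<in> N" using submodule_facts(6)[OF N(1)] fH unfolding hclosed_def by blast
qed

lemma gen_sub_eq: "gen_submodule zw_sq = Mset"
proof
  show "gen_submodule zw_sq \<subseteq> Mset" by (rule gen_sub_le)
  show "Mset \<subseteq> gen_submodule zw_sq"
    unfolding gen_submodule_def using Mset_le_N by blast
qed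

definition qa :: "nat \<Rightarrow> complex \<Rightarrow> complex \<Rightarrow> complex" where
  "qa d A B = (2 * (2 * of_nat d + 1) * A - 6 * B) / ((of_nat d + 1) * (of_nat d + 2))"

definition qb :: "nat \<Rightarrow> complex \<Rightarrow> complex \<Rightarrow> complex" where
  "qb d A B = (12 * B - 6 * of_nat d * A) / (of_nat d * (of_nat d + 1) * (of_nat d + 2))"

definition Qp :: "hvec \<Rightarrow> hvec" where
  "Qp g = (\<lambda>(i, j). qa (i + j) (Acf (i + j) g) (Bcf (i + j) g)
                   + qb (i + j) (Acf (i + j) g) (Bcf (i + j) g) * of_nat i)"

lemma sum_id_c: "(\<Sum>i\<le>d. (of_nat i :: complex)) = of_nat d * (of_nat d + 1) / 2"
  by (induction d) (simp_all add: field_simps)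

lemma sum_sq_c: "(\<Sum>i\<le>d. (of_nat i :: complex) ^ 2) = of_nat d * (of_nat d + 1) * (2 * of_nat d + 1) / 6"
  by (induction d) (simp_all add: field_simps power2_eq_square)

lemma Bcf_0: "Bcf 0 g = 0" by (simp add: Bcf_def)

lemma Qp_deg: "i \<le> d \<Longrightarrow> Qp g (i, d - i) = qa d (Acf d g) (Bcf d g) + qb d (Acf d g) (Bcf d g) * of_nat i"
  by (simp add: Qp_def)

lemma nz1: "(of_nat d :: complex) + 1 \<noteq> 0"
  by (metis of_nat_Suc of_nat_eq_0_iff nat.distinct(1) add.commute)

lemma nz2: "(of_nat d :: complex) + 2 \<noteq> 0"
  by (metis of_nat_numeral of_nat_add of_nat_eq_0_iff add_is_0 zero_neq_numeral)

lemma qa_mul: "qa d A B * ((of_nat d + 1) * (of_nat d + 2)) = 2 * (2 * of_nat d + 1) * A - 6 * B"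
  using nz1[of d] nz2[of d] by (simp add: qa_def)

lemma qb_mul: "d \<noteq> 0 \<Longrightarrow> qb d A B * (of_nat d * (of_nat d + 1) * (of_nat d + 2)) = 12 * B - 6 * of_nat d * A"
  using nz1[of d] nz2[of d] by (simp add: qb_def)

lemma alg_A: fixes x A B a b :: complex assumes "x \<noteq> 0" "x + 1 \<noteq> 0" "x + 2 \<noteq> 0"
  and "a * ((x + 1) * (x + 2)) = 2 * (2 * x + 1) * A - 6 * B"
  and "b * (x * (x + 1) * (x + 2)) = 12 * B - 6 * x * A"
  shows "2 * ((x + 1) * a) + b * (x * (x + 1)) = 2 * A"
  using assms by algebra

lemma alg_B: fixes x A B a b :: complex assumes "x \<noteq> 0" "x + 1 \<noteq> 0" "x + 2 \<noteq> 0"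
  and "a * ((x + 1) * (x + 2)) = 2 * (2 * x + 1) * A - 6 * B"
  and "b * (x * (x + 1) * (x + 2)) = 12 * B - 6 * x * A"
  shows "3 * (a * (x * (x + 1))) + b * (x * (x + 1) * (2 * x + 1)) = 6 * B"
  using assms by algebra

lemma qa_qb_A:
  assumes "d = 0 \<longrightarrow> B = 0"
  shows "(of_nat d + 1) * qa d A B + qb d A B * (of_nat d * (of_nat d + 1) / 2) = A"
proof (cases "d = 0")
  case True then show ?thesis using assms by (simp add: qa_def qb_def)
next
  case False
  have "2 * ((of_nat d + 1) * qa d A B) + qb d A B * (of_nat d * (of_nat d + 1)) = 2 * A"
    by (rule alg_A[OF _ nz1 nz2 qa_mul qb_mul[OF False]]) (use False in simp)
  then show ?thesis by (simp add: field_simps)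
qed

lemma qa_qb_B:
  assumes "d = 0 \<longrightarrow> B = 0"
  shows "qa d A B * (of_nat d * (of_nat d + 1) / 2)
        + qb d A B * (of_nat d * (of_nat d + 1) * (2 * of_nat d + 1) / 6) = B"
proof (cases "d = 0")
  case True then show ?thesis using assms by (simp add: qa_def qb_def)
next
  case False
  have "3 * (qa d A B * (of_nat d * (of_nat d + 1))) + qb d A B * (of_nat d * (of_nat d + 1) * (2 * of_nat d + 1)) = 6 * B"
    by (rule alg_B[OF _ nz1 nz2 qa_mul qb_mul[OF False]]) (use False in simp)
  moreover have "qa d A B * (of_nat d * (of_nat d + 1) / 2)
        + qb d A B * (of_nat d * (of_nat d + 1) * (2 * of_nat d + 1) / 6)
     = (3 * (qa d A B * (of_nat d * (of_nat d + 1))) + qb d A B * (of_nat d * (of_nat d + 1) * (2 * of_nat d + 1))) / 6"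
    by (simp add: field_simps)
  ultimately show ?thesis by simp
qed

lemma Acf_Qp: "Acf d (Qp g) = Acf d g"
proof -
  have "Acf d (Qp g) = (\<Sum>i\<le>d. qa d (Acf d g) (Bcf d g) + qb d (Acf d g) (Bcf d g) * of_nat i)"
    unfolding Acf_def[of d "Qp g"] by (rule sum.cong) (simp_all add: Qp_deg)
  also have "\<dots> = (of_nat d + 1) * qa d (Acf d g) (Bcf d g) + qb d (Acf d g) (Bcf d g) * (\<Sum>i\<le>d. of_nat i)"
    by (simp add: sum.distrib sum_distrib_right algebra_simps)
  also have "\<dots> = Acf d g"
    unfolding sum_id_c by (rule qa_qb_A) (simp add: Bcf_0)
  finally show ?thesis .
qed

lemma Bcf_Qp: "Bcf d (Qp g) = Bcf d g"
proof -
  have "Bcf d (Qp g) = (\<Sum>i\<le>d. qa d (Acf d g) (Bcf d g) * of_nat i + qb d (Acf d g) (Bcf d g) * of_nat i ^ 2)"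
    unfolding Bcf_def[of d "Qp g"] by (rule sum.cong) (simp_all add: Qp_deg algebra_simps power2_eq_square)
  also have "\<dots> = qa d (Acf d g) (Bcf d g) * (\<Sum>i\<le>d. of_nat i) + qb d (Acf d g) (Bcf d g) * (\<Sum>i\<le>d. of_nat i ^ 2)"
    by (simp add: sum.distrib sum_distrib_left)
  also have "\<dots> = Bcf d g"
    unfolding sum_id_c sum_sq_c by (rule qa_qb_B) (simp add: Bcf_0)
  finally show ?thesis .
qed

lemma cmod_add_sq: "(cmod (q + r))\<^sup>2 = (cmod q)\<^sup>2 + (cmod r)\<^sup>2 + 2 * Re (q * cnj r)"
  unfolding cmod_power2 by (simp add: power2_eq_square algebra_simps)

lemma deg_orth:
  assumes "Acf d h = 0" "Bcf d h = 0"
  shows "(\<Sum>i\<le>d. (qa d A B + qb d A B * of_nat i) * cnj (h (i, d - i))) = 0"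
proof -
  have "(\<Sum>i\<le>d. (qa d A B + qb d A B * of_nat i) * cnj (h (i, d - i)))
      = qa d A B * cnj (Acf d h) + qb d A B * cnj (Bcf d h)"
    by (simp add: Acf_def Bcf_def sum_distrib_left sum.distrib algebra_simps)
  then show ?thesis using assms by simp
qed

lemma deg_bessel:
  "(\<Sum>i\<le>d. (cmod (Qp g (i, d - i)))\<^sup>2) \<le> (\<Sum>i\<le>d. (cmod (g (i, d - i)))\<^sup>2)"
proof -
  define r where "r = g - Qp g"
  have rA: "Acf d r = 0" "Bcf d r = 0" by (simp_all add: r_def Acf_Qp Bcf_Qp)
  have orth: "(\<Sum>i\<le>d. Qp g (i, d - i) * cnj (r (i, d - i))) = 0"
    using deg_orth[OF rA, of "Acf d g" "Bcf d g"] by (simp add: Qp_deg)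
  have "(\<Sum>i\<le>d. (cmod (g (i, d - i)))\<^sup>2)
      = (\<Sum>i\<le>d. (cmod (Qp g (i, d - i)))\<^sup>2 + (cmod (r (i, d - i)))\<^sup>2
                  + 2 * Re (Qp g (i, d - i) * cnj (r (i, d - i))))"
  proof (rule sum.cong)
    fix i assume "i \<in> {..d}"
    have "g (i, d - i) = Qp g (i, d - i) + r (i, d - i)" by (simp add: r_def)
    then show "(cmod (g (i, d - i)))\<^sup>2 = (cmod (Qp g (i, d - i)))\<^sup>2 + (cmod (r (i, d - i)))\<^sup>2
                  + 2 * Re (Qp g (i, d - i) * cnj (r (i, d - i)))"
      by (simp only: cmod_add_sq)
  qed simp
  also have "\<dots> = (\<Sum>i\<le>d. (cmod (Qp g (i, d - i)))\<^sup>2) + (\<Sum>i\<le>d. (cmod (r (i, d - i)))\<^sup>2)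
                  + 2 * Re (\<Sum>i\<le>d. Qp g (i, d - i) * cnj (r (i, d - i)))"
    by (simp add: sum.distrib sum_distrib_left Re_sum)
  also have "\<dots> = (\<Sum>i\<le>d. (cmod (Qp g (i, d - i)))\<^sup>2) + (\<Sum>i\<le>d. (cmod (r (i, d - i)))\<^sup>2)"
    using orth by simp
  also have "\<dots> \<ge> (\<Sum>i\<le>d. (cmod (Qp g (i, d - i)))\<^sup>2)"
    by (simp add: sum_nonneg)
  finally show ?thesis .
qed

lemma finite_in_Tri: "finite F \<Longrightarrow> \<exists>D. F \<subseteq> Tri D"
proof -
  assume "finite F"
  then have "finite (fst ` F)" "finite (snd ` F)" by auto
  then obtain n1 n2 where n1: "\<forall>x\<in>fst ` F. x \<le> n1" and n2: "\<forall>x\<in>snd ` F. x \<le> n2"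
    by (meson finite_nat_set_iff_bounded_le)
  have "F \<subseteq> Tri (n1 + n2)"
  proof
    fix k assume "k \<in> F"
    then have "fst k \<le> n1" "snd k \<le> n2" using n1 n2 by auto
    then show "k \<in> Tri (n1 + n2)" by (cases k) (auto simp: Tri_def)
  qed
  then show ?thesis by blast
qed

lemma H2_Qp: assumes g: "g \<in> H2" shows "Qp g \<in> H2"
proof -
  define G where "G = (\<lambda>k. (cmod (g k))\<^sup>2)"
  have Gs: "G summable_on UNIV" using g by (simp add: G_def H2_D)
  have "(\<lambda>k. (cmod (Qp g k))\<^sup>2) summable_on UNIV"
  proof (rule nonneg_bdd_above_summable_on)
    show "bdd_above (sum (\<lambda>k. (cmod (Qp g k))\<^sup>2) ` {F. F \<subseteq> UNIV \<and> finite F})"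
    proof (rule bdd_aboveI2)
      fix F :: "(nat \<times> nat) set" assume "F \<in> {F. F \<subseteq> UNIV \<and> finite F}"
      then have fin: "finite F" by simp
      then obtain D where D: "F \<subseteq> Tri D" using finite_in_Tri by blast
      have "sum (\<lambda>k. (cmod (Qp g k))\<^sup>2) F \<le> sum (\<lambda>k. (cmod (Qp g k))\<^sup>2) (Tri D)"
        using D by (intro sum_mono2) (auto simp: finite_Tri)
      also have "\<dots> = (\<Sum>d\<le>D. \<Sum>i\<le>d. (cmod (Qp g (i, d - i)))\<^sup>2)" by (rule sum_Tri)
      also have "\<dots> \<le> (\<Sum>d\<le>D. \<Sum>i\<le>d. (cmod (g (i, d - i)))\<^sup>2)"
        by (intro sum_mono deg_bessel)
      also have "\<dots> = sum G (Tri D)" by (simp add: sum_Tri G_def)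
      also have "\<dots> \<le> infsum G UNIV"
        by (rule finite_sum_le_infsum[OF Gs]) (auto simp: finite_Tri G_def)
      finally show "sum (\<lambda>k. (cmod (Qp g k))\<^sup>2) F \<le> infsum G UNIV" .
    qed
  qed simp
  then show ?thesis by (simp add: H2_def)
qed

lemma Qp_orth:
  assumes g: "g \<in> H2" and h: "h \<in> Mset"
  shows "hinner (Qp g) h = 0"
proof -
  have hH: "h \<in> H2" using h by (simp add: Mset_H2)
  have s: "(\<lambda>k. Qp g k * cnj (h k)) summable_on UNIV"
    using H2_prod[OF H2_Qp[OF g] hH] .
  then have "((\<lambda>k. Qp g k * cnj (h k)) has_sum hinner (Qp g) h) UNIV"
    by (simp add: hinner_def)
  then have lim: "(\<lambda>D. \<Sum>d\<le>D. \<Sum>i\<le>d. Qp g (i, d - i) * cnj (h (i, d - i))) \<longlonglongrightarrow> hinner (Qp g) h"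
    by (rule has_sum_Tri)
  have "(\<Sum>i\<le>d. Qp g (i, d - i) * cnj (h (i, d - i))) = 0" for d
  proof -
    have "Acf d h = 0" "Bcf d h = 0" using h by (auto simp: Mset_def)
    from deg_orth[OF this, of "Acf d g" "Bcf d g"] show ?thesis
      by (simp add: Qp_deg)
  qed
  then have "(\<lambda>D. \<Sum>d\<le>D. \<Sum>i\<le>d. Qp g (i, d - i) * cnj (h (i, d - i))) = (\<lambda>D. 0)" by simp
  with lim have "(\<lambda>D. 0::complex) \<longlonglongrightarrow> hinner (Qp g) h" by simp
  then show ?thesis using LIMSEQ_unique tendsto_const by metis
qed

lemma infsum_diff':
  fixes f g :: "'a \<Rightarrow> complex"
  assumes "f summable_on A" "g summable_on A"
  shows "infsum (\<lambda>x. f x - g x) A = infsum f A - infsum g A"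
proof -
  have "(\<lambda>x. - g x) summable_on A" using assms(2) by (simp add: summable_on_uminus)
  then have "infsum (\<lambda>x. f x + - g x) A = infsum f A + infsum (\<lambda>x. - g x) A"
    using infsum_add[OF assms(1)] by blast
  then show ?thesis by (simp add: infsum_uminus)
qed

lemma hinner_diff:
  assumes "f \<in> H2" "g \<in> H2" "h \<in> H2"
  shows "hinner (f - g) h = hinner f h - hinner g h"
  unfolding hinner_def
  using infsum_diff'[OF H2_prod[OF assms(1,3)] H2_prod[OF assms(2,3)]]
  by (simp add: algebra_simps)

lemma hinner_self_zero:
  assumes e: "e \<in> H2" and z: "hinner e e = 0"
  shows "e = 0"
proof -
  have "e k * cnj (e k) = 0" for k
  proof (rule nonneg_infsum_le_0D_complex[of "\<lambda>k. e k * cnj (e k)" UNIV k])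
    show "infsum (\<lambda>k. e k * cnj (e k)) UNIV \<le> 0" using z by (simp add: hinner_def)
    show "(\<lambda>k. e k * cnj (e k)) summable_on UNIV" by (rule H2_prod[OF e e])
    show "\<And>x. x \<in> UNIV \<Longrightarrow> 0 \<le> e x * cnj (e x)"
      by (simp add: complex_mult_cnj less_eq_complex_def)
  qed simp
  then show ?thesis by (simp add: fun_eq_iff)
qed

lemma hproj_Mset:
  assumes g: "g \<in> H2"
  shows "hproj Mset g = g - Qp g"
  unfolding hproj_def
proof (rule the_equality)
  have "g - Qp g \<in> H2" using g H2_Qp H2_diff by blast
  moreover have "Acf d (g - Qp g) = 0 \<and> Bcf d (g - Qp g) = 0" for d
    by (simp add: Acf_Qp Bcf_Qp)
  ultimately have "g - Qp g \<in> Mset" by (simp add: Mset_def)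
  moreover have "\<forall>h\<in>Mset. hinner (g - (g - Qp g)) h = 0"
    using Qp_orth[OF g] by simp
  ultimately show "g - Qp g \<in> Mset \<and> (\<forall>h\<in>Mset. hinner (g - (g - Qp g)) h = 0)" by blast
  then have p0: "g - Qp g \<in> Mset" by blast
  fix p assume p: "p \<in> Mset \<and> (\<forall>h\<in>Mset. hinner (g - p) h = 0)"
  define e where "e = (g - p) - Qp g"
  have e_eq: "e = (g - Qp g) - p" by (simp add: e_def algebra_simps)
  have eM: "e \<in> Mset" unfolding e_eq using p0 p by (simp add: Mset_diff)
  then have eH: "e \<in> H2" by (simp add: Mset_H2)
  have gp: "g - p \<in> H2" using g p by (simp add: H2_diff Mset_H2)
  have "hinner ((g - p) - Qp g) e = hinner (g - p) e - hinner (Qp g) e"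
    by (rule hinner_diff[OF gp H2_Qp[OF g] eH])
  then have "hinner e e = hinner (g - p) e - hinner (Qp g) e"
    by (simp only: e_def[symmetric])
  also have "\<dots> = 0" using p eM Qp_orth[OF g eM] by simp
  finally have "e = 0" using hinner_self_zero[OF eH] by simp
  then show "p = g - Qp g" unfolding e_eq by simp
qed

definition Kraw :: "nat \<Rightarrow> nat \<Rightarrow> complex \<Rightarrow> complex \<Rightarrow> complex \<Rightarrow> complex \<Rightarrow> complex" where
  "Kraw d i a b A B =
     (if d = 0 then A else 0) - (qa d A B + qb d A B * of_nat i)
     + (if 1 \<le> i then qa (d - 1) (A - a) (B - A + a) + qb (d - 1) (A - a) (B - A + a) * of_nat (i - 1) else 0)
     + (if i < d then qa (d - 1) (A - b) (B - of_nat d * b) + qb (d - 1) (A - b) (B - of_nat d * b) * of_nat i else 0)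
     - (if 1 \<le> i \<and> i < d then qa (d - 2) (A - b - a) (B - of_nat d * b - (A - b) + a)
            + qb (d - 2) (A - b - a) (B - of_nat d * b - (A - b) + a) * of_nat (i - 1) else 0)"

lemma S1_apply: "S1 f (i, j) = (if i = 0 then 0 else f (i - 1, j))" by (simp add: S1_def)
lemma S2_apply: "S2 f (i, j) = (if j = 0 then 0 else f (i, j - 1))" by (simp add: S2_def)
lemma S1adj_apply[simp]: "S1adj f (i, j) = f (Suc i, j)" by (simp add: S1adj_def)
lemma S2adj_apply[simp]: "S2adj f (i, j) = f (i, Suc j)" by (simp add: S2adj_def)
lemma Qp_apply: "Qp g (i, j) = qa (i + j) (Acf (i + j) g) (Bcf (i + j) g) + qb (i + j) (Acf (i + j) g) (Bcf (i + j) g) * of_nat i"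
  by (simp add: Qp_def)

lemma core_formula:
  assumes f: "f \<in> H2"
  shows "core_op (gen_submodule zw_sq) f (i, j) =
         Kraw (i + j) i (f (0, i + j)) (f (i + j, 0)) (Acf (i + j) f) (Bcf (i + j) f)"
proof -
  have f1: "S1adj f \<in> H2" "S2adj f \<in> H2" "S1adj (S2adj f) \<in> H2"
    using f by (simp_all add: H2_S1adj H2_S2adj)
  have co: "core_op (gen_submodule zw_sq) f (i, j) =
      (f - Qp f) (i, j) - S1 (S1adj f - Qp (S1adj f)) (i, j) - S2 (S2adj f - Qp (S2adj f)) (i, j)
      + S1 (S2 (S1adj (S2adj f) - Qp (S1adj (S2adj f)))) (i, j)"
    unfolding core_op_def gen_sub_eq hproj_Mset[OF f] hproj_Mset[OF f1(1)] hproj_Mset[OF f1(2)]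
      hproj_Mset[OF f1(3)] by simp
  show ?thesis
  proof (cases i)
    case 0
    show ?thesis
    proof (cases j)
      case 0
      then show ?thesis using \<open>i = 0\<close> unfolding co
        by (simp add: S1_apply S2_apply Qp_apply Kraw_def Acf_def Bcf_def)
    next
      case (Suc j')
      then show ?thesis using \<open>i = 0\<close> unfolding co
        by (simp add: S1_apply S2_apply Qp_apply Kraw_def Acf_S2adj Bcf_S2adj)
    qed
  next
    case (Suc i')
    show ?thesis
    proof (cases j)
      case 0
      then show ?thesis using \<open>i = Suc i'\<close> unfolding co
        by (simp add: S1_apply S2_apply Qp_apply Kraw_def Acf_S1adj Bcf_S1adj)
    next
      case (Suc j')
      then show ?thesis using \<open>i = Suc i'\<close> unfolding co
        by (simp add: S1_apply S2_apply Qp_apply Kraw_def Acf_S1adj Bcf_S1adj Acf_S2adj Bcf_S2adj)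
    qed
  qed
qed

lemma gen_interior: fixes x i a b A B u0 v0 u1 v1 u2 v2 u3 v3 w1 w2 w3 w4 L :: complex
  assumes L: "L = x * (x + 1) * (x + 2) * (x - 1) * (x - 2)" "L \<noteq> 0"
  and "L * u0 = (2*(2*x+1)*A - 6*B) * (x * (x - 1) * (x - 2))"
  and "L * v0 = (12*B - 6*x*A) * ((x - 1) * (x - 2))"
  and "L * u1 = (2*(2*(x-1)+1)*(A - a) - 6*(B - A + a)) * ((x + 2) * (x - 1) * (x - 2))"
  and "L * v1 = (12*(B - A + a) - 6*(x-1)*(A - a)) * ((x + 2) * (x - 2))"
  and "L * u2 = (2*(2*(x-1)+1)*(A - b) - 6*(B - x*b)) * ((x + 2) * (x - 1) * (x - 2))"
  and "L * v2 = (12*(B - x*b) - 6*(x-1)*(A - b)) * ((x + 2) * (x - 2))"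
  and "L * u3 = (2*(2*(x-2)+1)*(A - b - a) - 6*(B - x*b - (A - b) + a)) * ((x + 1) * (x + 2) * (x - 2))"
  and "L * v3 = (12*(B - x*b - (A - b) + a) - 6*(x-2)*(A - b - a)) * ((x + 1) * (x + 2))"
  and "L * w1 = -2 * ((x + 2) * (x - 1) * (x - 2))"
  and "L * w2 = 4 * ((x + 2) * (x - 2))"
  and "L * w3 = 6 * ((x - 1) * (x - 2))"
  and "L * w4 = 36"
  shows "- (u0 + v0 * i) + (u1 + v1 * (i - 1)) + (u2 + v2 * i) - (u3 + v3 * (i - 1))
   = w1 * (a + b) + w2 * (A - a - b) - (w3 * (a - b) + w4 * (2 * (B - x * b) - x * (A - a - b))) * (2 * i - x)"
  using assms by algebra

lemma gen_zero: fixes x a b A B u0 u2 k1 k2 w1 w3 L :: complex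
  assumes L: "L = x * (x + 1) * (x + 2) * (x - 1) * (x - 2)" "L \<noteq> 0"
  and "L * u0 = (2*(2*x+1)*A - 6*B) * (x * (x - 1) * (x - 2))"
  and "L * u2 = (2*(2*(x-1)+1)*(A - b) - 6*(B - x*b)) * ((x + 2) * (x - 1) * (x - 2))"
  and "L * k1 = (x - 1) * ((x + 2) * (x - 1) * (x - 2))"
  and "L * k2 = ((x - 1) * (x - 2)) * ((x - 1) * (x - 2))"
  and "L * w1 = -2 * ((x + 2) * (x - 1) * (x - 2))"
  and "L * w3 = 6 * ((x - 1) * (x - 2))"
  shows "- u0 + u2 = k1 * (a + b) + w1 * (A - a - b) - (k2 * (a - b) + w3 * (2 * (B - x * b) - x * (A - a - b)))"
  using assms by algebra

lemma gen_top: fixes x a b A B u0 v0 u1 v1 k1 k2 w1 w3 L :: complex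
  assumes L: "L = x * (x + 1) * (x + 2) * (x - 1) * (x - 2)" "L \<noteq> 0"
  and "L * u0 = (2*(2*x+1)*A - 6*B) * (x * (x - 1) * (x - 2))"
  and "L * v0 = (12*B - 6*x*A) * ((x - 1) * (x - 2))"
  and "L * u1 = (2*(2*(x-1)+1)*(A - a) - 6*(B - A + a)) * ((x + 2) * (x - 1) * (x - 2))"
  and "L * v1 = (12*(B - A + a) - 6*(x-1)*(A - a)) * ((x + 2) * (x - 2))"
  and "L * k1 = (x - 1) * ((x + 2) * (x - 1) * (x - 2))"
  and "L * k2 = ((x - 1) * (x - 2)) * ((x - 1) * (x - 2))"
  and "L * w1 = -2 * ((x + 2) * (x - 1) * (x - 2))"
  and "L * w3 = 6 * ((x - 1) * (x - 2))"
  shows "- (u0 + v0 * x) + (u1 + v1 * (x - 1)) = k1 * (a + b) + w1 * (A - a - b) + (k2 * (a - b) + w3 * (2 * (B - x * b) - x * (A - a - b)))"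
  using assms by algebra

definition cxv :: "nat \<Rightarrow> complex" where "cxv d = -2 / (of_nat d - 1)"
definition czv :: "nat \<Rightarrow> complex" where "czv d = 6 / ((of_nat d - 1) * (of_nat d - 2))"
definition k1v :: "nat \<Rightarrow> complex" where "k1v d = (of_nat d - 1) / (of_nat d * (of_nat d + 1))"
definition k2v :: "nat \<Rightarrow> complex" where
  "k2v d = (of_nat d - 1) * (of_nat d - 2) / (of_nat d * (of_nat d + 1) * (of_nat d + 2))"
definition xv :: "nat \<Rightarrow> nat \<Rightarrow> complex" where "xv d i = (if i = 0 \<or> i = d then 1 else cxv d)"
definition yv :: "nat \<Rightarrow> nat \<Rightarrow> complex" where
  "yv d i = (if i = 0 then 1 else if i = d then -1 else czv d * (2 * of_nat i - of_nat d))"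
definition phiv :: "nat \<Rightarrow> complex \<Rightarrow> complex \<Rightarrow> complex \<Rightarrow> complex" where
  "phiv d a b A = a + b + cxv d * (A - a - b)"
definition psiv :: "nat \<Rightarrow> complex \<Rightarrow> complex \<Rightarrow> complex \<Rightarrow> complex \<Rightarrow> complex" where
  "psiv d a b A B = a - b + czv d * (2 * (B - of_nat d * b) - of_nat d * (A - a - b))"
definition Kfin :: "nat \<Rightarrow> nat \<Rightarrow> complex \<Rightarrow> complex \<Rightarrow> complex \<Rightarrow> complex \<Rightarrow> complex" where
  "Kfin d i a b A B = k1v d * phiv d a b A * xv d i - k2v d * psiv d a b A B * yv d i"

lemma frac_L: "(D::complex) \<noteq> 0 \<Longrightarrow> L = D * E \<Longrightarrow> L * (N / D) = N * E"
  by simp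

lemma frac_eqI: "(b::complex) \<noteq> 0 \<Longrightarrow> d \<noteq> 0 \<Longrightarrow> a * d = c * b \<Longrightarrow> a / b = c / d"
  by (simp add: frac_eq_eq)

lemma Kraw_Kfin:
  assumes d3: "d \<ge> 3" and id: "i \<le> d"
  shows "Kraw d i a b A B = Kfin d i a b A B"
proof -
  define x :: complex where "x = of_nat d"
  have "d \<noteq> 2" "d \<noteq> 1" using d3 by simp_all
  then have "(of_nat d :: complex) \<noteq> of_nat 2" "(of_nat d :: complex) \<noteq> of_nat 1"
    by (simp_all only: of_nat_eq_iff, simp_all)
  then have nz: "x \<noteq> 0" "x + 1 \<noteq> 0" "x + 2 \<noteq> 0" "x - 1 \<noteq> 0" "x - 2 \<noteq> 0"
    unfolding x_def using d3 nz1[of d] nz2[of d] by auto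
  have d1: "of_nat (d - 1) = x - 1" and d2: "of_nat (d - 2) = x - 2"
    using d3 by (simp_all add: x_def of_nat_diff)
  have d1a: "x - 1 + 1 = x" and d1b: "x - 1 + 2 = x + 1" and d2a: "x - 2 + 1 = x - 1"
    and d2b: "x - 2 + 2 = x" by (simp_all add: algebra_simps)
  define L where "L = x * (x + 1) * (x + 2) * (x - 1) * (x - 2)"
  have Lnz: "L \<noteq> 0" using nz by (simp add: L_def)
  have hu0: "L * qa d A' B' = (2*(2*x+1)*A' - 6*B') * (x * (x - 1) * (x - 2))" for A' B'
    unfolding qa_def x_def[symmetric]
    by (rule frac_L) (use nz in \<open>simp\<close>, unfold L_def, algebra)
  have hv0: "L * qb d A' B' = (12*B' - 6*x*A') * ((x - 1) * (x - 2))" for A' B'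
    unfolding qb_def x_def[symmetric]
    by (rule frac_L) (use nz in \<open>simp\<close>, unfold L_def, algebra)
  have hu1: "L * qa (d - 1) A' B' = (2*(2*(x-1)+1)*A' - 6*B') * ((x + 2) * (x - 1) * (x - 2))" for A' B'
    unfolding qa_def d1 d1a d1b
    by (rule frac_L) (use nz in \<open>simp\<close>, unfold L_def, algebra)
  have hv1: "L * qb (d - 1) A' B' = (12*B' - 6*(x-1)*A') * ((x + 2) * (x - 2))" for A' B'
    unfolding qb_def d1 d1a d1b
    by (rule frac_L) (use nz in \<open>simp\<close>, unfold L_def, algebra)
  have hu3: "L * qa (d - 2) A' B' = (2*(2*(x-2)+1)*A' - 6*B') * ((x + 1) * (x + 2) * (x - 2))" for A' B'
    unfolding qa_def d2 d2a d2b
    by (rule frac_L) (use nz in \<open>simp\<close>, unfold L_def, algebra)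
  have hv3: "L * qb (d - 2) A' B' = (12*B' - 6*(x-2)*A') * ((x + 1) * (x + 2))" for A' B'
    unfolding qb_def d2 d2a d2b
    by (rule frac_L) (use nz in \<open>simp\<close>, unfold L_def, algebra)
  have hk1: "L * k1v d = (x - 1) * ((x + 2) * (x - 1) * (x - 2))"
    unfolding k1v_def x_def[symmetric]
    by (rule frac_L) (use nz in \<open>simp\<close>, unfold L_def, algebra)
  have hk2: "L * k2v d = ((x - 1) * (x - 2)) * ((x - 1) * (x - 2))"
    unfolding k2v_def x_def[symmetric]
    by (rule frac_L) (use nz in \<open>simp\<close>, unfold L_def, algebra)
  have ew1: "k1v d * cxv d = -2 / (x * (x + 1))"
    unfolding k1v_def cxv_def x_def[symmetric] times_divide_times_eq
    by (rule frac_eqI) (use nz in \<open>simp\<close>, use nz in \<open>simp\<close>, algebra)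
  have ew2: "k1v d * cxv d * cxv d = 4 / (x * (x + 1) * (x - 1))"
    unfolding ew1 unfolding cxv_def x_def[symmetric] times_divide_times_eq
    by (rule frac_eqI) (use nz in \<open>simp\<close>, use nz in \<open>simp\<close>, algebra)
  have ew3: "k2v d * czv d = 6 / (x * (x + 1) * (x + 2))"
    unfolding k2v_def czv_def x_def[symmetric] times_divide_times_eq
    by (rule frac_eqI) (use nz in \<open>simp\<close>, use nz in \<open>simp\<close>, algebra)
  have ew4: "k2v d * czv d * czv d = 36 / L"
    unfolding ew3 unfolding czv_def x_def[symmetric] times_divide_times_eq L_def
    by (rule frac_eqI) (use nz in \<open>simp\<close>, use nz in \<open>simp\<close>, algebra)
  have hw1: "L * (k1v d * cxv d) = -2 * ((x + 2) * (x - 1) * (x - 2))"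
    unfolding ew1 by (rule frac_L) (use nz in \<open>simp\<close>, unfold L_def, algebra)
  have hw2: "L * (k1v d * cxv d * cxv d) = 4 * ((x + 2) * (x - 2))"
    unfolding ew2 by (rule frac_L) (use nz in \<open>simp\<close>, unfold L_def, algebra)
  have hw3: "L * (k2v d * czv d) = 6 * ((x - 1) * (x - 2))"
    unfolding ew3 by (rule frac_L) (use nz in \<open>simp\<close>, unfold L_def, algebra)
  have hw4: "L * (k2v d * czv d * czv d) = 36"
    unfolding ew4 using Lnz by simp
  have dn0: "d \<noteq> 0" using d3 by simp
  show ?thesis
  proof (cases "i = 0")
    case True
    have "Kfin d i a b A B = k1v d * (a + b) + (k1v d * cxv d) * (A - a - b)
        - (k2v d * (a - b) + (k2v d * czv d) * (2 * (B - x * b) - x * (A - a - b)))"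
      using True by (simp add: Kfin_def xv_def yv_def phiv_def psiv_def x_def algebra_simps)
    moreover have "Kraw d i a b A B = - qa d A B + qa (d - 1) (A - b) (B - x * b)"
      using True dn0 d3 by (simp add: Kraw_def x_def)
    moreover have "- qa d A B + qa (d - 1) (A - b) (B - x * b) = k1v d * (a + b) + (k1v d * cxv d) * (A - a - b)
        - (k2v d * (a - b) + (k2v d * czv d) * (2 * (B - x * b) - x * (A - a - b)))"
      by (rule gen_zero[OF L_def Lnz hu0 hu1 hk1 hk2 hw1 hw3])
    ultimately show ?thesis by simp
  next
    case False
    note i0 = False
    show ?thesis
    proof (cases "i = d")
      case True
      have "Kfin d i a b A B = k1v d * (a + b) + (k1v d * cxv d) * (A - a - b)
          + (k2v d * (a - b) + (k2v d * czv d) * (2 * (B - x * b) - x * (A - a - b)))"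
        using True dn0 by (simp add: Kfin_def xv_def yv_def phiv_def psiv_def x_def algebra_simps)
      moreover have "Kraw d i a b A B = - (qa d A B + qb d A B * x) + (qa (d - 1) (A - a) (B - A + a)
          + qb (d - 1) (A - a) (B - A + a) * (x - 1))"
        using True dn0 d1 by (simp add: Kraw_def x_def)
      moreover have "- (qa d A B + qb d A B * x) + (qa (d - 1) (A - a) (B - A + a)
          + qb (d - 1) (A - a) (B - A + a) * (x - 1)) = k1v d * (a + b) + (k1v d * cxv d) * (A - a - b)
          + (k2v d * (a - b) + (k2v d * czv d) * (2 * (B - x * b) - x * (A - a - b)))"
        by (rule gen_top[OF L_def Lnz hu0 hv0 hu1 hv1 hk1 hk2 hw1 hw3])
      ultimately show ?thesis by simp
    next
      case False
      have ii: "of_nat (i - 1) = (of_nat i :: complex) - 1" using i0 by (simp add: of_nat_diff)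
      have "Kfin d i a b A B = (k1v d * cxv d) * (a + b) + (k1v d * cxv d * cxv d) * (A - a - b)
          - ((k2v d * czv d) * (a - b) + (k2v d * czv d * czv d) * (2 * (B - x * b) - x * (A - a - b)))
             * (2 * of_nat i - x)"
        using False i0 by (simp add: Kfin_def xv_def yv_def phiv_def psiv_def x_def algebra_simps)
      moreover have "Kraw d i a b A B = - (qa d A B + qb d A B * of_nat i)
          + (qa (d - 1) (A - a) (B - A + a) + qb (d - 1) (A - a) (B - A + a) * (of_nat i - 1))
          + (qa (d - 1) (A - b) (B - x * b) + qb (d - 1) (A - b) (B - x * b) * of_nat i)
          - (qa (d - 2) (A - b - a) (B - x * b - (A - b) + a)
             + qb (d - 2) (A - b - a) (B - x * b - (A - b) + a) * (of_nat i - 1))"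
        using False i0 id dn0 ii by (simp add: Kraw_def x_def)
      moreover have "- (qa d A B + qb d A B * of_nat i)
          + (qa (d - 1) (A - a) (B - A + a) + qb (d - 1) (A - a) (B - A + a) * (of_nat i - 1))
          + (qa (d - 1) (A - b) (B - x * b) + qb (d - 1) (A - b) (B - x * b) * of_nat i)
          - (qa (d - 2) (A - b - a) (B - x * b - (A - b) + a)
             + qb (d - 2) (A - b - a) (B - x * b - (A - b) + a) * (of_nat i - 1))
          = (k1v d * cxv d) * (a + b) + (k1v d * cxv d * cxv d) * (A - a - b)
          - ((k2v d * czv d) * (a - b) + (k2v d * czv d * czv d) * (2 * (B - x * b) - x * (A - a - b)))
             * (2 * of_nat i - x)"
        by (rule gen_interior[OF L_def Lnz hu0 hv0 hu1 hv1 hu1 hv1 hu3 hv3 hw1 hw2 hw3 hw4])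
      ultimately show ?thesis by simp
    qed
  qed
qed

lemma Kraw_zero: "Kraw e i 0 0 0 0 = 0"
  by (simp add: Kraw_def qa_def qb_def)

lemma Kraw_d0: "Kraw 0 0 a b A 0 = 0"
  by (simp add: Kraw_def qa_def qb_def)

lemma Kraw_d1: "i \<le> 1 \<Longrightarrow> Kraw 1 i a b (a + b) b = 0"
  by (cases i) (auto simp: Kraw_def qa_def qb_def field_simps)

lemma Kraw_d2: "i \<le> 2 \<Longrightarrow> Kraw 2 i a b A (A - a + b) = (3 * a + 3 * b - 2 * A) / 6 * (if i = 1 then -2 else 1)"
proof -
  assume "i \<le> 2"
  then have "i = 0 \<or> i = 1 \<or> i = 2" by auto
  then show ?thesis
    by (elim disjE) (simp_all add: Kraw_def qa_def qb_def field_simps numeral_2_eq_2)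
qed

lemma sum2: "2 * (\<Sum>i\<le>d. (of_nat i :: complex)) = of_nat d * (of_nat d + 1)"
  by (simp add: sum_id_c)

lemma sum6: "6 * (\<Sum>i\<le>d. (of_nat i :: complex) ^ 2) = of_nat d * (of_nat d + 1) * (2 * of_nat d + 1)"
  by (simp add: sum_sq_c)

lemma sum_delta0: "(\<Sum>i\<le>(d::nat). if i = 0 then (c::complex) else 0) = c"
  by (simp add: sum.delta)

lemma sum_deltad: "(\<Sum>i\<le>(d::nat). if i = d then (c::complex) else 0) = c"
  by (simp add: sum.delta)

lemma div_mul_cancel': "(D::complex) \<noteq> 0 \<Longrightarrow> N / D * D = N"
  by simp

lemma alg_lam2: fixes x k c :: complex
  assumes h1: "c * ((x - 1) * (x - 2)) = 6" and h2: "k * (x * (x + 1) * (x + 2)) = (x - 1) * (x - 2)"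
  shows "2 * k * (1 + c * x) * x * ((x + 1) * (x + 2)) = 2 * ((x + 1) * (x + 2))"
proof -
  have "2 * k * (1 + c * x) * x * ((x + 1) * (x + 2)) = 2 * (1 + c * x) * (k * (x * (x + 1) * (x + 2)))"
    by (simp add: algebra_simps)
  also have "\<dots> = 2 * (x - 1) * (x - 2) + 2 * x * (c * ((x - 1) * (x - 2)))"
    unfolding h2 by (simp add: algebra_simps)
  also have "\<dots> = 2 * ((x + 1) * (x + 2))"
    unfolding h1 by (simp add: algebra_simps)
  finally show ?thesis .
qed

lemma alg_lam1: fixes x k c :: complex
  assumes "c * (x - 1) = -2" "k * (x * (x + 1)) = x - 1"
  shows "2 * k * (1 - c) * x * (x + 1) = 2 * (x + 1)"
  using assms by algebra

context
  fixes d :: nat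
  assumes d3: "d \<ge> 3"
begin

definition "xx = (of_nat d :: complex)"

lemma xx_eq: "xx = of_nat d" by (simp add: xx_def)

lemma nzs: "xx \<noteq> 0" "xx + 1 \<noteq> 0" "xx + 2 \<noteq> 0" "xx - 1 \<noteq> 0" "xx - 2 \<noteq> 0"
proof -
  have "d \<noteq> 2" "d \<noteq> 1" using d3 by simp_all
  then have "(of_nat d :: complex) \<noteq> of_nat 2" "(of_nat d :: complex) \<noteq> of_nat 1"
    by (simp_all only: of_nat_eq_iff, simp_all)
  then show "xx \<noteq> 0" "xx + 1 \<noteq> 0" "xx + 2 \<noteq> 0" "xx - 1 \<noteq> 0" "xx - 2 \<noteq> 0"
    unfolding xx_def using d3 nz1[of d] nz2[of d] by auto
qed

lemma cx_eq: "cxv d * (xx - 1) = -2"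
  unfolding cxv_def xx_def[symmetric] by (rule div_mul_cancel'[OF nzs(4)])

lemma cz_eq: "czv d * ((xx - 1) * (xx - 2)) = 6"
  using nzs by (simp add: czv_def xx_def)

lemma k1_eq: "k1v d * (xx * (xx + 1)) = xx - 1"
  using nzs by (simp add: k1v_def xx_def)

lemma k2_eq: "k2v d * (xx * (xx + 1) * (xx + 2)) = (xx - 1) * (xx - 2)"
  using nzs by (simp add: k2v_def xx_def)

lemma lam1: "2 * k1v d * (1 - cxv d) = 2 / xx"
proof -
  have "(2 * k1v d * (1 - cxv d) * xx) * (xx + 1) = 2 * (xx + 1)"
    by (rule alg_lam1[OF cx_eq k1_eq])
  then have "2 * k1v d * (1 - cxv d) * xx = 2"
    by (metis mult_right_cancel nzs(2))
  then show ?thesis using nzs by (simp add: field_simps)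
qed

lemma lam2: "2 * k2v d * (1 + czv d * xx) = 2 / xx"
proof -
  have "(2 * k2v d * (1 + czv d * xx) * xx) * ((xx + 1) * (xx + 2)) = 2 * ((xx + 1) * (xx + 2))"
    by (rule alg_lam2[OF cz_eq k2_eq])
  moreover have "(xx + 1) * (xx + 2) \<noteq> 0" using nzs by simp
  ultimately have "2 * k2v d * (1 + czv d * xx) * xx = 2"
    by (metis mult_right_cancel)
  then show ?thesis using nzs by (simp add: field_simps)
qed

lemma xv_alt: "i \<le> d \<Longrightarrow> xv d i = cxv d + (if i = 0 then 1 - cxv d else 0) + (if i = d then 1 - cxv d else 0)"
  using d3 by (auto simp: xv_def)

lemma ixv_alt: "i \<le> d \<Longrightarrow> of_nat i * xv d i = cxv d * of_nat i + (if i = d then xx * (1 - cxv d) else 0)"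
  using d3 by (auto simp: xv_def xx_def algebra_simps)

lemma yv_alt: "i \<le> d \<Longrightarrow> yv d i = czv d * (2 * of_nat i - xx) + (if i = 0 then 1 + czv d * xx else 0)
     + (if i = d then -1 - czv d * xx else 0)"
  using d3 by (auto simp: yv_def xx_def algebra_simps)

lemma iyv_alt: "i \<le> d \<Longrightarrow> of_nat i * yv d i = czv d * (2 * (of_nat i)\<^sup>2 - xx * of_nat i)
     + (if i = d then xx * (-1 - czv d * xx) else 0)"
  using d3 by (auto simp: yv_def xx_def algebra_simps power2_eq_square)

lemma sumX: "(\<Sum>i\<le>d. xv d i) = 0"
proof -
  have "(\<Sum>i\<le>d. xv d i) = (\<Sum>i\<le>d. cxv d + (if i = 0 then 1 - cxv d else 0) + (if i = d then 1 - cxv d else 0))"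
    by (rule sum.cong) (simp_all add: xv_alt)
  also have "\<dots> = (xx + 1) * cxv d + (1 - cxv d) + (1 - cxv d)"
    by (simp add: sum.distrib sum_delta0 sum_deltad xx_def)
  also have "\<dots> = 0" using cx_eq by algebra
  finally show ?thesis .
qed

lemma sumiX: "(\<Sum>i\<le>d. of_nat i * xv d i) = 0"
proof -
  have "(\<Sum>i\<le>d. of_nat i * xv d i) = (\<Sum>i\<le>d. cxv d * of_nat i + (if i = d then xx * (1 - cxv d) else 0))"
    by (rule sum.cong) (simp_all add: ixv_alt)
  also have "\<dots> = cxv d * (\<Sum>i\<le>d. of_nat i) + xx * (1 - cxv d)"
    by (simp add: sum.distrib sum_deltad sum_distrib_left)
  also have "\<dots> = 0" using cx_eq sum2[of d] unfolding xx_def[symmetric] by algebra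
  finally show ?thesis .
qed

lemma sumY: "(\<Sum>i\<le>d. yv d i) = 0"
proof -
  have "(\<Sum>i\<le>d. yv d i) = (\<Sum>i\<le>d. czv d * (2 * of_nat i - xx) + (if i = 0 then 1 + czv d * xx else 0)
     + (if i = d then -1 - czv d * xx else 0))"
    by (rule sum.cong) (simp_all add: yv_alt)
  also have "\<dots> = czv d * (2 * (\<Sum>i\<le>d. of_nat i) - (xx + 1) * xx) + (1 + czv d * xx) + (-1 - czv d * xx)"
    by (simp add: sum.distrib sum_delta0 sum_deltad sum_distrib_left sum_subtractf xx_def algebra_simps)
  also have "\<dots> = 0" using sum2[of d] unfolding xx_def[symmetric] by algebra
  finally show ?thesis .
qed

lemma sumiY: "(\<Sum>i\<le>d. of_nat i * yv d i) = 0"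
proof -
  have "(\<Sum>i\<le>d. of_nat i * yv d i) = (\<Sum>i\<le>d. czv d * (2 * (of_nat i)\<^sup>2 - xx * of_nat i)
     + (if i = d then xx * (-1 - czv d * xx) else 0))"
    by (rule sum.cong) (simp_all add: iyv_alt)
  also have "\<dots> = czv d * (2 * (\<Sum>i\<le>d. (of_nat i)\<^sup>2) - xx * (\<Sum>i\<le>d. of_nat i)) + xx * (-1 - czv d * xx)"
    by (simp add: sum.distrib sum_deltad sum_distrib_left sum_subtractf algebra_simps)
  also have "\<dots> = 0" using sum2[of d] sum6[of d] cz_eq unfolding xx_def[symmetric] by algebra
  finally show ?thesis .
qed

lemma spec3:
  fixes F :: "nat \<Rightarrow> complex"
  assumes mu: "\<mu> \<noteq> 0"
    and eq: "\<And>i. i \<le> d \<Longrightarrow> \<mu> * F i = Kfin d i (F 0) (F d) (\<Sum>i\<le>d. F i) (\<Sum>i\<le>d. of_nat i * F i)"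
  shows "\<mu> = 2 / xx \<or> \<mu> = - (2 / xx) \<or> (\<forall>i\<le>d. F i = 0)"
proof -
  define a where "a = F 0"
  define b where "b = F d"
  define A where "A = (\<Sum>i\<le>d. F i)"
  define B where "B = (\<Sum>i\<le>d. of_nat i * F i)"
  define p where "p = k1v d * phiv d a b A"
  define q where "q = k2v d * psiv d a b A B"
  have eqF: "\<mu> * F i = p * xv d i - q * yv d i" if "i \<le> d" for i
    using eq[OF that] by (simp add: Kfin_def p_def q_def a_def b_def A_def B_def)
  have "\<mu> * A = (\<Sum>i\<le>d. \<mu> * F i)" by (simp add: A_def sum_distrib_left)
  also have "\<dots> = (\<Sum>i\<le>d. p * xv d i - q * yv d i)" by (rule sum.cong) (simp_all add: eqF)
  also have "\<dots> = p * (\<Sum>i\<le>d. xv d i) - q * (\<Sum>i\<le>d. yv d i)"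
    by (simp add: sum_subtractf sum_distrib_left)
  also have "\<dots> = 0" by (simp add: sumX sumY)
  finally have A0: "A = 0" using mu by simp
  have "\<mu> * B = (\<Sum>i\<le>d. of_nat i * (\<mu> * F i))" by (simp add: B_def sum_distrib_left algebra_simps)
  also have "\<dots> = (\<Sum>i\<le>d. p * (of_nat i * xv d i) - q * (of_nat i * yv d i))"
    by (rule sum.cong) (simp_all add: eqF algebra_simps)
  also have "\<dots> = p * (\<Sum>i\<le>d. of_nat i * xv d i) - q * (\<Sum>i\<le>d. of_nat i * yv d i)"
    by (simp add: sum_subtractf sum_distrib_left)
  also have "\<dots> = 0" by (simp add: sumiX sumiY)
  finally have B0: "B = 0" using mu by simp
  have ea: "\<mu> * a = p - q" using eqF[of 0] by (simp add: a_def xv_def yv_def)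
  have eb: "\<mu> * b = p + q" using eqF[of d] d3 by (simp add: b_def xv_def yv_def)
  have phi: "phiv d a b A = (1 - cxv d) * (a + b)" by (simp add: phiv_def A0 algebra_simps)
  have psi: "psiv d a b A B = (1 + czv d * xx) * (a - b)" by (simp add: psiv_def A0 B0 xx_def algebra_simps)
  have phi_eq: "\<mu> * phiv d a b A = 2 / xx * phiv d a b A"
  proof -
    have "\<mu> * phiv d a b A = (1 - cxv d) * (\<mu> * a + \<mu> * b)" by (simp add: phi algebra_simps)
    also have "\<dots> = (1 - cxv d) * (2 * p)" using ea eb by simp
    also have "\<dots> = (2 * k1v d * (1 - cxv d)) * phiv d a b A" by (simp add: p_def algebra_simps)
    finally show ?thesis by (simp add: lam1)
  qed
  have psi_eq: "\<mu> * psiv d a b A B = - (2 / xx) * psiv d a b A B"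
  proof -
    have "\<mu> * psiv d a b A B = (1 + czv d * xx) * (\<mu> * a - \<mu> * b)" by (simp add: psi algebra_simps)
    also have "\<dots> = (1 + czv d * xx) * (- 2 * q)" using ea eb by simp
    also have "\<dots> = - ((2 * k2v d * (1 + czv d * xx)) * psiv d a b A B)" by (simp add: q_def algebra_simps)
    finally show ?thesis by (simp add: lam2)
  qed
  show ?thesis
  proof (cases "\<mu> = 2 / xx \<or> \<mu> = - (2 / xx)")
    case True then show ?thesis by blast
  next
    case False
    have "(\<mu> - 2 / xx) * phiv d a b A = 0" using phi_eq by (simp only: left_diff_distrib) simp
    moreover have "(\<mu> + 2 / xx) * psiv d a b A B = 0" using psi_eq by (simp only: distrib_right) simp
    moreover have "\<mu> - 2 / xx \<noteq> 0" "\<mu> + 2 / xx \<noteq> 0" using False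
      by (simp_all add: eq_neg_iff_add_eq_0[symmetric])
    ultimately have "phiv d a b A = 0" "psiv d a b A B = 0" by simp_all
    then have "p = 0" "q = 0" by (simp_all add: p_def q_def)
    then have "\<forall>i\<le>d. F i = 0" using eqF mu by simp
    then show ?thesis by blast
  qed
qed

end

definition dvec :: "nat \<Rightarrow> (nat \<Rightarrow> complex) \<Rightarrow> hvec" where
  "dvec d v = (\<lambda>(i, j). if i + j = d then v i else 0)"

lemma dvec_H2: "dvec d v \<in> H2"
  by (rule H2_finite[OF finite_Tri[of d]]) (auto simp: Tri_def dvec_def)

lemma dvec_nz: "v 0 \<noteq> 0 \<Longrightarrow> dvec d v \<noteq> 0"
proof
  assume "v 0 \<noteq> 0" "dvec d v = 0"
  then have "dvec d v (0, d) = 0" by simp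
  then show False using \<open>v 0 \<noteq> 0\<close> by (simp add: dvec_def)
qed

lemma Acf_dvec: "Acf e (dvec d v) = (if e = d then (\<Sum>i\<le>d. v i) else 0)"
  unfolding Acf_def dvec_def by (auto intro!: sum.cong)

lemma Bcf_dvec: "Bcf e (dvec d v) = (if e = d then (\<Sum>i\<le>d. of_nat i * v i) else 0)"
  unfolding Bcf_def dvec_def by (auto intro!: sum.cong)

lemma dvec_eigen:
  assumes K: "\<And>i. i \<le> d \<Longrightarrow> Kraw d i (v 0) (v d) (\<Sum>i\<le>d. v i) (\<Sum>i\<le>d. of_nat i * v i) = \<mu> * v i"
  shows "core_op (gen_submodule zw_sq) (dvec d v) = (\<lambda>k. \<mu> * dvec d v k)"
proof
  fix k :: "nat \<times> nat"
  obtain i j where k: "k = (i, j)" by fastforce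
  show "core_op (gen_submodule zw_sq) (dvec d v) k = \<mu> * dvec d v k"
  proof (cases "i + j = d")
    case True
    then have "i \<le> d" by simp
    then show ?thesis unfolding k core_formula[OF dvec_H2] Acf_dvec Bcf_dvec using True K[of i]
      by (simp add: dvec_def)
  next
    case False
    then show ?thesis unfolding k core_formula[OF dvec_H2] Acf_dvec Bcf_dvec
      by (simp add: Kraw_zero dvec_def)
  qed
qed

lemma in_eig:
  assumes "f \<in> H2" "f \<noteq> 0" "core_op (gen_submodule zw_sq) f = (\<lambda>k. \<mu> * f k)"
  shows "\<mu> \<in> eigenvalues (core_op (gen_submodule zw_sq))"
  using assms unfolding eigenvalues_def by blast

lemma eig0: "0 \<in> eigenvalues (core_op (gen_submodule zw_sq))"
proof (rule in_eig[OF dvec_H2 dvec_nz])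
  show "(\<lambda>_. 1::complex) 0 \<noteq> 0" by simp
  show "core_op (gen_submodule zw_sq) (dvec 0 (\<lambda>_. 1)) = (\<lambda>k. 0 * dvec 0 (\<lambda>_. 1) k)"
    by (rule dvec_eigen) (simp add: Kraw_d0)
qed

definition v2 :: "nat \<Rightarrow> complex" where "v2 i = (if i = 1 then -2 else 1)"

lemma eig1: "1 \<in> eigenvalues (core_op (gen_submodule zw_sq))"
proof (rule in_eig[OF dvec_H2 dvec_nz])
  show "v2 0 \<noteq> 0" by (simp add: v2_def)
  have s1: "(\<Sum>i\<le>2. v2 i) = 0" by (simp add: v2_def numeral_2_eq_2)
  have s2: "(\<Sum>i\<le>2. of_nat i * v2 i) = 0" by (simp add: v2_def numeral_2_eq_2)
  show "core_op (gen_submodule zw_sq) (dvec 2 v2) = (\<lambda>k. 1 * dvec 2 v2 k)"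
  proof (rule dvec_eigen)
    fix i :: nat assume i: "i \<le> 2"
    have "Kraw 2 i (v2 0) (v2 2) 0 (0 - v2 0 + v2 2) = (3 * v2 0 + 3 * v2 2 - 2 * 0) / 6 * (if i = 1 then -2 else 1)"
      by (rule Kraw_d2[OF i])
    then show "Kraw 2 i (v2 0) (v2 2) (\<Sum>i\<le>2. v2 i) (\<Sum>i\<le>2. of_nat i * v2 i) = 1 * v2 i"
      unfolding s1 s2 by (simp add: v2_def)
  qed
qed

lemma xv_0: "xv d 0 = 1" by (simp add: xv_def)
lemma xv_d: "xv d d = 1" by (simp add: xv_def)
lemma yv_0: "yv d 0 = 1" by (simp add: yv_def)
lemma yv_d: "d \<noteq> 0 \<Longrightarrow> yv d d = -1" by (simp add: yv_def)

lemma eig_pos: assumes d3: "d \<ge> 3" shows "2 / of_nat d \<in> eigenvalues (core_op (gen_submodule zw_sq))"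
proof (rule in_eig[OF dvec_H2 dvec_nz])
  show "xv d 0 \<noteq> 0" by (simp add: xv_0)
  show "core_op (gen_submodule zw_sq) (dvec d (xv d)) = (\<lambda>k. 2 / of_nat d * dvec d (xv d) k)"
  proof (rule dvec_eigen)
    fix i assume i: "i \<le> d"
    have "Kraw d i (xv d 0) (xv d d) (\<Sum>i\<le>d. xv d i) (\<Sum>i\<le>d. of_nat i * xv d i) = Kfin d i 1 1 0 0"
      using Kraw_Kfin[OF d3 i] by (simp add: xv_0 xv_d sumX[OF d3] sumiX[OF d3])
    also have "\<dots> = (2 * k1v d * (1 - cxv d)) * xv d i"
      by (simp add: Kfin_def phiv_def psiv_def algebra_simps)
    also have "\<dots> = 2 / of_nat d * xv d i" by (simp add: lam1[OF d3] xx_eq[OF d3])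
    finally show "Kraw d i (xv d 0) (xv d d) (\<Sum>i\<le>d. xv d i) (\<Sum>i\<le>d. of_nat i * xv d i) = 2 / of_nat d * xv d i" .
  qed
qed

lemma eig_neg: assumes d3: "d \<ge> 3" shows "- (2 / of_nat d) \<in> eigenvalues (core_op (gen_submodule zw_sq))"
proof (rule in_eig[OF dvec_H2 dvec_nz])
  show "yv d 0 \<noteq> 0" by (simp add: yv_0)
  have dn: "d \<noteq> 0" using d3 by simp
  show "core_op (gen_submodule zw_sq) (dvec d (yv d)) = (\<lambda>k. - (2 / of_nat d) * dvec d (yv d) k)"
  proof (rule dvec_eigen)
    fix i assume i: "i \<le> d"
    have "Kraw d i (yv d 0) (yv d d) (\<Sum>i\<le>d. yv d i) (\<Sum>i\<le>d. of_nat i * yv d i) = Kfin d i 1 (-1) 0 0"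
      using Kraw_Kfin[OF d3 i] by (simp add: yv_0 yv_d[OF dn] sumY[OF d3] sumiY[OF d3])
    also have "\<dots> = - ((2 * k2v d * (1 + czv d * of_nat d)) * yv d i)"
      by (simp add: Kfin_def phiv_def psiv_def algebra_simps)
    also have "\<dots> = - (2 / of_nat d) * yv d i" using lam2[OF d3] by (simp add: xx_eq[OF d3])
    finally show "Kraw d i (yv d 0) (yv d d) (\<Sum>i\<le>d. yv d i) (\<Sum>i\<le>d. of_nat i * yv d i) = - (2 / of_nat d) * yv d i" .
  qed
qed

lemma sum_le1: "(\<Sum>i\<le>Suc 0. g i) = g 0 + (g (Suc 0) :: complex)"
  by simp

lemma sum_le2: "(\<Sum>i\<le>(2::nat). g i) = g 0 + g 1 + (g 2 :: complex)"
  by (simp add: numeral_2_eq_2)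

lemma eig_sub:
  assumes "\<mu> \<in> eigenvalues (core_op (gen_submodule zw_sq))"
  shows "\<mu> = 0 \<or> \<mu> = 1 \<or> (\<exists>d\<ge>3. \<mu> = 2 / of_nat d \<or> \<mu> = - (2 / of_nat d))"
proof -
  obtain f where fH: "f \<in> H2" and fnz: "f \<noteq> 0"
    and ev: "core_op (gen_submodule zw_sq) f = (\<lambda>k. \<mu> * f k)"
    using assms unfolding eigenvalues_def by blast
  show ?thesis
  proof (cases "\<mu> = 0")
    case True then show ?thesis by simp
  next
    case mu: False
    obtain k where "f k \<noteq> 0" using fnz by (auto simp: fun_eq_iff)
    then obtain i0 j0 where fij: "f (i0, j0) \<noteq> 0" by (cases k) auto
    define d where "d = i0 + j0"
    define F where "F = (\<lambda>i. f (i, d - i))"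
    have i0d: "i0 \<le> d" by (simp add: d_def)
    have Fi0: "F i0 \<noteq> 0" using fij by (simp add: F_def d_def)
    have eqK: "\<mu> * F i = Kraw d i (F 0) (F d) (\<Sum>i\<le>d. F i) (\<Sum>i\<le>d. of_nat i * F i)" if "i \<le> d" for i
    proof -
      have "\<mu> * F i = core_op (gen_submodule zw_sq) f (i, d - i)" by (simp add: ev F_def)
      also have "\<dots> = Kraw d i (f (0, d)) (f (d, 0)) (Acf d f) (Bcf d f)"
        using core_formula[OF fH, of i "d - i"] that by simp
      finally show ?thesis by (simp add: F_def Acf_def Bcf_def)
    qed
    have Fz: False if "\<And>i. i \<le> d \<Longrightarrow> \<mu> * F i = 0"
      using that[OF i0d] Fi0 mu by simp
    consider "d = 0" | "d = 1" | "d = 2" | "d \<ge> 3" by linarith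
    then show ?thesis
    proof cases
      case 1
      have "\<mu> * F i = 0" if "i \<le> d" for i
      proof -
        have "i = 0" using that 1 by simp
        then show ?thesis using eqK[OF that] 1 by (simp add: Kraw_d0)
      qed
      then show ?thesis using Fz by blast
    next
      case 2
      have "\<mu> * F i = 0" if "i \<le> d" for i
      proof -
        have "Kraw 1 i (F 0) (F 1) (F 0 + F 1) (F 1) = 0" using that 2 by (intro Kraw_d1) simp
        then show ?thesis using eqK[OF that] 2 by (simp add: sum_le1)
      qed
      then show ?thesis using Fz by blast
    next
      case 3
      define A where "A = F 0 + F 1 + F 2"
      define p where "p = (3 * F 0 + 3 * F 2 - 2 * A) / 6"
      have eqp: "\<mu> * F i = p * (if i = 1 then -2 else 1)" if "i \<le> 2" for i
      proof -
        have "\<mu> * F i = Kraw 2 i (F 0) (F 2) A (A - F 0 + F 2)"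
          using eqK[of i] that 3 by (simp add: sum_le2 A_def algebra_simps)
        also have "\<dots> = p * (if i = 1 then -2 else 1)"
          unfolding p_def by (rule Kraw_d2[OF that])
        finally show ?thesis .
      qed
      have "6 * p = 3 * F 0 + 3 * F 2 - 2 * A" by (simp add: p_def)
      also have "\<dots> = F 0 + F 2 - 2 * F 1" by (simp add: A_def algebra_simps)
      finally have six: "6 * p = F 0 + F 2 - 2 * F 1" .
      have "\<mu> * (6 * p) = \<mu> * F 0 + \<mu> * F 2 - 2 * (\<mu> * F 1)" unfolding six by (simp add: algebra_simps)
      also have "\<dots> = 6 * p" using eqp[of 0] eqp[of 1] eqp[of 2] by simp
      finally have "(\<mu> - 1) * (6 * p) = 0" by (simp add: algebra_simps)
      then have "\<mu> = 1 \<or> p = 0" by simp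
      then show ?thesis
      proof
        assume "p = 0"
        then have "\<mu> * F i = 0" if "i \<le> d" for i using eqp[of i] that 3 by simp
        then show ?thesis using Fz by blast
      qed simp
    next
      case 4
      have "\<mu> * F i = Kfin d i (F 0) (F d) (\<Sum>i\<le>d. F i) (\<Sum>i\<le>d. of_nat i * F i)" if "i \<le> d" for i
        using eqK[OF that] Kraw_Kfin[OF 4 that] by simp
      from spec3[OF 4 mu this] Fi0 i0d xx_eq[OF 4]
      show ?thesis using 4 by auto
    qed
  qed
qed

lemma conv_val: "n \<ge> 1 \<Longrightarrow> complex_of_real (2 / (real n + 2)) = 2 / of_nat (n + 2)"
  by (simp add: of_real_divide)

theorem theorem3p6:
  shows "eigenvalues (core_op (gen_submodule zw_sq)) =
           {0, 1} \<union> {complex_of_real (2 / (real n + 2)) | n. n \<ge> 1}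
                  \<union> {- complex_of_real (2 / (real n + 2)) | n. n \<ge> 1}
       \<and> (2/3 :: complex) \<in> eigenvalues (core_op (gen_submodule zw_sq))
       \<and> (\<forall>\<mu>\<in>eigenvalues (core_op (gen_submodule zw_sq)).
             \<mu> \<in> \<real> \<and> Re \<mu> \<le> 1 \<and> (\<mu> \<noteq> 1 \<longrightarrow> Re \<mu> \<le> 2/3))"
proof -
  let ?E = "eigenvalues (core_op (gen_submodule zw_sq))"
  let ?R = "{0, 1} \<union> {complex_of_real (2 / (real n + 2)) | n. n \<ge> 1}
                  \<union> {- complex_of_real (2 / (real n + 2)) | n. n \<ge> 1}"
  have sub: "?E \<subseteq> ?R"
  proof
    fix \<mu> assume "\<mu> \<in> ?E"
    from eig_sub[OF this] show "\<mu> \<in> ?R"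
    proof (elim disjE exE conjE)
      fix d :: nat assume d3: "d \<ge> 3"
      define n where "n = d - 2"
      have n1: "n \<ge> 1" and dn: "d = n + 2" using d3 by (simp_all add: n_def)
      have cv: "complex_of_real (2 / (real n + 2)) = 2 / of_nat d" using conv_val[OF n1] dn by simp
      {
        assume "\<mu> = 2 / of_nat d"
        then have "\<mu> = complex_of_real (2 / (real n + 2))" using cv by simp
        then show "\<mu> \<in> ?R" using n1 by blast
      next
        assume "\<mu> = - (2 / of_nat d)"
        then have "\<mu> = - complex_of_real (2 / (real n + 2))" using cv by simp
        then show "\<mu> \<in> ?R" using n1 by blast
      }
    qed simp_all
  qed
  have sup: "?R \<subseteq> ?E"
  proof
    fix \<mu> assume "\<mu> \<in> ?R"
    then consider "\<mu> = 0" | "\<mu> = 1" | n where "n \<ge> 1" "\<mu> = complex_of_real (2 / (real n + 2))"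
      | n where "n \<ge> 1" "\<mu> = - complex_of_real (2 / (real n + 2))" by blast
    then show "\<mu> \<in> ?E"
    proof cases
      case 1 then show ?thesis using eig0 by simp
    next
      case 2 then show ?thesis using eig1 by simp
    next
      case 3
      have "n + 2 \<ge> 3" using 3 by simp
      then have "2 / of_nat (n + 2) \<in> ?E" by (rule eig_pos)
      then show ?thesis using 3 conv_val[of n] by metis
    next
      case 4
      have "n + 2 \<ge> 3" using 4 by simp
      then have "- (2 / of_nat (n + 2)) \<in> ?E" by (rule eig_neg)
      then show ?thesis using 4 conv_val[of n] by metis
    qed
  qed
  have eq: "?E = ?R" using sub sup by blast
  have two3: "(2/3 :: complex) = complex_of_real (2 / (real (1::nat) + 2))" by simp
  have "(2/3 :: complex) \<in> ?R" unfolding two3 by blast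
  then have m23: "(2/3 :: complex) \<in> ?E" using eq by simp
  have props: "\<mu> \<in> \<real> \<and> Re \<mu> \<le> 1 \<and> (\<mu> \<noteq> 1 \<longrightarrow> Re \<mu> \<le> 2/3)" if "\<mu> \<in> ?R" for \<mu>
  proof -
    from that consider "\<mu> = 0" | "\<mu> = 1" | n where "n \<ge> 1" "\<mu> = complex_of_real (2 / (real n + 2))"
      | n where "n \<ge> 1" "\<mu> = - complex_of_real (2 / (real n + 2))" by blast
    then show ?thesis
    proof cases
      case 1 then show ?thesis by simp
    next
      case 2 then show ?thesis by simp
    next
      case 3
      have "real n + 2 \<ge> 3" using 3 by simp
      then have "2 / (real n + 2) \<le> 2 / 3" by (intro divide_left_mono) auto
      moreover have "2 / (real n + 2) \<ge> 0" by simp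
      ultimately show ?thesis using 3 by (simp add: Reals_of_real)
    next
      case 4
      have nn: "2 / (real n + 2) \<ge> 0" by simp
      have re: "Re \<mu> = - (2 / (real n + 2))" using 4 by simp
      have "\<mu> \<in> \<real>" unfolding 4(2) by (intro Reals_minus Reals_of_real)
      moreover have "Re \<mu> \<le> 1" using re nn by linarith
      moreover have "Re \<mu> \<le> 2/3" using re nn by linarith
      ultimately show ?thesis by blast
    qed
  qed
  show ?thesis using eq m23 props by blast
qed

end
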